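(* Let $r\ge 2$ be a constant, $n\ge 2$, and $k\ge 2r$ a divisor of $n$. Let $g^k:\{0,1\}^k\to\mathbb{R}$ be $\mathrm{Fork}_{k,r}$ with the last $r$ bits of the argument complemented, i.e. $g^k(z_0\dots z_{k-1})=\mathrm{Fork}_{k,r}(z_0\dots z_{k-r-1}\bar z_{k-r}\dots\bar z_{k-1})$, so that $1^k$ is its unique optimum, where $\mathrm{Fork}_{k,r}(x)=k+1$ if $x=0^r1^{k-r}$, $k+2$ if $x=1^{k-r}0^r$, and $|x|_1$ otherwise. Define LeadingOnes with $k$-block Fork as $$F(x)=\sum_{i=0}^{n/k-1} g^k(x_{ik}\dots x_{ik+k-1})\cdot\prod_{j=0}^{ik-1}x_j,\quad x\in\{0,1\}^n.$$ Then the expected optimization time $E(T)$ of the (1+1) EA (mutation probability $1/n$) on $F$ satisfies $E(T)\in\Theta\!\left(\frac1k n^{2r+1}\right)$.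
   Context: The (1+1) EA with mutation probability $1/n$: start with $x$ uniform in $\{0,1\}^n$; each iteration create $y$ by flipping each bit of $x$ independently with probability $1/n$, set $x\gets y$ if $F(y)\ge F(x)$. Optimization time = number of iterations until the optimum is the current solution. Asymptotics are with respect to $n$. *)

theory Defs
  imports "HOL-Probability.Probability"
begin

text \<open>Bit strings of length n are boolean lists of length n (True = 1).\<close>

fun mutate :: "real \<Rightarrow> bool list \<Rightarrow> bool list pmf" where
  "mutate p [] = return_pmf []"
| "mutate p (b # bs) =
     bind_pmf (bernoulli_pmf p) (\<lambda>f.
     bind_pmf (mutate p bs) (\<lambda>rest.
     return_pmf ((if f then \<not> b else b) # rest)))"

definition ones :: "bool list \<Rightarrow> nat" where
  "ones x = length (filter id x)"

text \<open>One iteration of the (1+1) EA with mutation probability 1/n, stopped once the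
  optimum opt is the current solution (this does not change the first hitting time).\<close>
definition ea_step :: "(bool list \<Rightarrow> real) \<Rightarrow> nat \<Rightarrow> bool list \<Rightarrow> bool list \<Rightarrow> bool list pmf" where
  "ea_step F n opt x =
     (if x = opt then return_pmf x
      else bind_pmf (mutate (1 / real n) x)
             (\<lambda>y. return_pmf (if F y \<ge> F x then y else x)))"

definition ea_state :: "(bool list \<Rightarrow> real) \<Rightarrow> nat \<Rightarrow> bool list \<Rightarrow> nat \<Rightarrow> bool list pmf" where
  "ea_state F n opt t =
     ((\<lambda>p. bind_pmf p (ea_step F n opt)) ^^ t) (pmf_of_set {x. length x = n})"

text \<open>Expected optimization time E(T) = sum over t of P(T > t), where T > t iff the
  (stopped) process is not at the optimum after t iterations.\<close>
definition ea_expected_time :: "(bool list \<Rightarrow> real) \<Rightarrow> nat \<Rightarrow> bool list \<Rightarrow> ennreal" where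
  "ea_expected_time F n opt =
     (\<Sum>t. ennreal (measure_pmf.prob (ea_state F n opt t) {x. x \<noteq> opt}))"

definition fork :: "nat \<Rightarrow> nat \<Rightarrow> bool list \<Rightarrow> real" where
  "fork k r x =
     (if x = replicate r False @ replicate (k - r) True then real k + 1
      else if x = replicate (k - r) True @ replicate r False then real k + 2
      else real (ones x))"

definition gblock :: "nat \<Rightarrow> nat \<Rightarrow> bool list \<Rightarrow> real" where
  "gblock k r z = fork k r (take (k - r) z @ map Not (drop (k - r) z))"

definition lo_fork :: "nat \<Rightarrow> nat \<Rightarrow> nat \<Rightarrow> bool list \<Rightarrow> real" where
  "lo_fork n k r x =
     (\<Sum>i<n div k. gblock k r (take k (drop (i * k) x)) *
                   (\<Prod>j<i * k. if x ! j then 1 else 0))"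

end

theory Submission imports Defs begin

definition itK :: "('a \<Rightarrow> 'a pmf) \<Rightarrow> nat \<Rightarrow> 'a pmf \<Rightarrow> 'a pmf" where
  "itK K t \<mu> = ((\<lambda>p. bind_pmf p K) ^^ t) \<mu>"

lemma itK_0[simp]: "itK K 0 \<mu> = \<mu>" by (simp add: itK_def)
lemma itK_Suc: "itK K (Suc t) \<mu> = bind_pmf (itK K t \<mu>) K" by (simp add: itK_def)
lemma itK_Suc': "itK K (Suc t) \<mu> = itK K t (bind_pmf \<mu> K)"
  by (simp add: itK_def funpow_Suc_right del: funpow.simps)

lemma itK_bind: "itK K t (bind_pmf \<mu> f) = bind_pmf \<mu> (\<lambda>x. itK K t (f x))"
  by (induction t) (simp_all add: itK_Suc bind_assoc_pmf)

lemma itK_ret: "itK K t \<mu> = bind_pmf \<mu> (\<lambda>x. itK K t (return_pmf x))"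
  using itK_bind[of K t \<mu> return_pmf] by (simp add: bind_return_pmf')

lemma set_itK:
  assumes "\<And>x. x \<in> \<Omega> \<Longrightarrow> set_pmf (K x) \<subseteq> \<Omega>" "set_pmf \<mu> \<subseteq> \<Omega>"
  shows "set_pmf (itK K t \<mu>) \<subseteq> \<Omega>"
  using assms by (induction t) (auto simp: itK_Suc)

lemma ennreal_suminf_ge: "(\<Sum>i<n. f i) \<le> (\<Sum>i. (f i :: ennreal))"
  unfolding suminf_eq_SUP by (rule SUP_upper) auto

lemma ennreal_suminf_le: "(\<And>n. (\<Sum>i<n. f i) \<le> c) \<Longrightarrow> (\<Sum>i. (f i :: ennreal)) \<le> c"
  unfolding suminf_eq_SUP by (rule SUP_least) auto

lemma ub_abstract:
  fixes V :: "'a \<Rightarrow> ennreal"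
  assumes cl: "\<And>x. x \<in> \<Omega> \<Longrightarrow> set_pmf (K x) \<subseteq> \<Omega>" and mu: "set_pmf \<mu> \<subseteq> \<Omega>"
    and opt: "K opt = return_pmf opt"
    and drift: "\<And>x. x \<in> \<Omega> \<Longrightarrow> x \<noteq> opt \<Longrightarrow> 1 + (\<integral>\<^sup>+y. V y \<partial>K x) \<le> V x"
  shows "(\<Sum>t. emeasure (itK K t \<mu>) {x. x \<noteq> opt}) \<le> (\<integral>\<^sup>+x. V x \<partial>\<mu>)"
proof -
  have step: "emeasure (itK K T \<mu>) {x. x \<noteq> opt} + (\<integral>\<^sup>+x. V x \<partial>itK K (Suc T) \<mu>)
      \<le> (\<integral>\<^sup>+x. V x \<partial>itK K T \<mu>)" for T
  proof -
    have "emeasure (itK K T \<mu>) {x. x \<noteq> opt} + (\<integral>\<^sup>+x. V x \<partial>itK K (Suc T) \<mu>)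
      = (\<integral>\<^sup>+x. indicator {x. x \<noteq> opt} x + (\<integral>\<^sup>+y. V y \<partial>K x) \<partial>itK K T \<mu>)"
      by (simp add: itK_Suc nn_integral_add)
    also have "\<dots> \<le> (\<integral>\<^sup>+x. V x \<partial>itK K T \<mu>)"
    proof (rule nn_integral_mono_AE, rule AE_pmfI)
      fix x assume "x \<in> set_pmf (itK K T \<mu>)"
      then have "x \<in> \<Omega>" using set_itK[of \<Omega> K \<mu> T] cl mu by blast
      then show "indicator {x. x \<noteq> opt} x + (\<integral>\<^sup>+y. V y \<partial>K x) \<le> V x"
        using drift[of x] by (cases "x = opt") (auto simp: opt)
    qed
    finally show ?thesis .
  qed
  have "(\<Sum>t<T. emeasure (itK K t \<mu>) {x. x \<noteq> opt}) + (\<integral>\<^sup>+x. V x \<partial>itK K T \<mu>)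
      \<le> (\<integral>\<^sup>+x. V x \<partial>\<mu>)" for T
  proof (induction T)
    case 0 then show ?case by simp
  next
    case (Suc T)
    have "(\<Sum>t<Suc T. emeasure (itK K t \<mu>) {x. x \<noteq> opt}) + (\<integral>\<^sup>+x. V x \<partial>itK K (Suc T) \<mu>)
      = (\<Sum>t<T. emeasure (itK K t \<mu>) {x. x \<noteq> opt}) + (emeasure (itK K T \<mu>) {x. x \<noteq> opt} + (\<integral>\<^sup>+x. V x \<partial>itK K (Suc T) \<mu>))"
      by (simp add: add.assoc)
    also have "\<dots> \<le> (\<Sum>t<T. emeasure (itK K t \<mu>) {x. x \<noteq> opt}) + (\<integral>\<^sup>+x. V x \<partial>itK K T \<mu>)"
      by (rule add_left_mono[OF step])
    finally show ?case using Suc.IH by (rule order_trans)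
  qed
  then have "(\<Sum>t<T. emeasure (itK K t \<mu>) {x. x \<noteq> opt}) \<le> (\<integral>\<^sup>+x. V x \<partial>\<mu>)" for T
    by (rule order_trans[rotated, OF _ add_increasing2]) auto
  then show ?thesis by (rule ennreal_suminf_le)
qed

lemma itK_Suc_ret: "itK K (Suc t) (return_pmf x) = bind_pmf (K x) (\<lambda>y. itK K t (return_pmf y))"
  by (simp add: itK_Suc' bind_return_pmf itK_ret[of K t "K x"])

lemma emeasure_itK: "emeasure (itK K t \<mu>) A = (\<integral>\<^sup>+x. emeasure (itK K t (return_pmf x)) A \<partial>\<mu>)"
  by (subst itK_ret) simp

lemma itK_absorb: "x \<in> S \<Longrightarrow> itK (\<lambda>x. if x \<in> S then return_pmf x else K x) t (return_pmf x) = return_pmf x"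
  by (induction t) (simp_all add: itK_Suc bind_return_pmf)

lemma hit_abstract:
  assumes "opt \<in> S" "K opt = return_pmf opt"
  shows "emeasure (itK K t \<mu>) {opt} \<le> emeasure (itK (\<lambda>x. if x \<in> S then return_pmf x else K x) t \<mu>) S"
proof -
  define KS where "KS = (\<lambda>x. if x \<in> S then return_pmf x else K x)"
  have pw: "emeasure (itK K t (return_pmf x)) {opt} \<le> emeasure (itK KS t (return_pmf x)) S" for x
  proof (induction t arbitrary: x)
    case 0 then show ?case using assms by (auto simp: indicator_def)
  next
    case (Suc t)
    show ?case
    proof (cases "x \<in> S")
      case True
      then have "itK KS (Suc t) (return_pmf x) = return_pmf x" unfolding KS_def by (rule itK_absorb)
      then show ?thesis using True by (simp add: measure_pmf.emeasure_le_1)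
    next
      case False
      have "emeasure (itK K (Suc t) (return_pmf x)) {opt}
          = (\<integral>\<^sup>+y. emeasure (itK K t (return_pmf y)) {opt} \<partial>K x)"
        by (simp add: itK_Suc_ret)
      also have "\<dots> \<le> (\<integral>\<^sup>+y. emeasure (itK KS t (return_pmf y)) S \<partial>K x)"
        by (rule nn_integral_mono) (rule Suc.IH)
      also have "\<dots> = emeasure (itK KS (Suc t) (return_pmf x)) S"
        using False by (simp add: itK_Suc_ret KS_def)
      finally show ?thesis .
    qed
  qed
  show ?thesis
    unfolding KS_def[symmetric]
    by (subst (1 2) emeasure_itK) (rule nn_integral_mono, rule pw)
qed

lemma occ_abstract:
  fixes q :: real and K :: "'a \<Rightarrow> 'a pmf"
  assumes stay: "\<And>x. x \<in> D \<Longrightarrow> ennreal (1 - q) \<le> emeasure (K x) D" and q: "0 \<le> q" "q \<le> 1"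
  shows "emeasure (itK (\<lambda>x. if x \<in> S then return_pmf x else K x) s \<mu>) D * ennreal (\<Sum>t<T. (1 - q) ^ t)
     \<le> (\<Sum>t<T + s. emeasure (itK K t \<mu>) D)"
proof -
  define KS where "KS = (\<lambda>x. if x \<in> S then return_pmf x else K x)"
  define h where "h T x = (\<Sum>t<T. emeasure (itK K t (return_pmf x)) D)" for T x
  have a: "(\<Sum>t<T. emeasure (itK K t \<mu>) D) = (\<integral>\<^sup>+x. h T x \<partial>\<mu>)" for T \<mu>
    unfolding h_def by (subst emeasure_itK) (simp add: nn_integral_sum)
  have b: "h (Suc T) x = indicator D x + (\<integral>\<^sup>+y. h T y \<partial>K x)" for T x
  proof -
    have "h (Suc T) x = emeasure (itK K 0 (return_pmf x)) D + (\<Sum>t<T. emeasure (itK K (Suc t) (return_pmf x)) D)"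
      unfolding h_def by (subst sum.lessThan_Suc_shift) simp
    also have "\<dots> = indicator D x + (\<integral>\<^sup>+y. h T y \<partial>K x)"
      unfolding h_def by (simp add: itK_Suc_ret nn_integral_sum)
    finally show ?thesis .
  qed
  have hmono: "h T x \<le> h (Suc T) x" for T x
    unfolding h_def by simp
  have c: "(\<integral>\<^sup>+y. h T y \<partial>KS x) \<le> h (Suc T) x" for T x
  proof (cases "x \<in> S")
    case True then show ?thesis by (simp add: KS_def hmono)
  next
    case False then show ?thesis by (simp add: KS_def b)
  qed
  have d: "(\<integral>\<^sup>+x. h T x \<partial>itK KS s \<mu>) \<le> (\<integral>\<^sup>+x. h (T + s) x \<partial>\<mu>)" for T
  proof (induction s arbitrary: T \<mu>)
    case 0 then show ?case by simp
  next
    case (Suc s)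
    have "(\<integral>\<^sup>+x. h T x \<partial>itK KS (Suc s) \<mu>) = (\<integral>\<^sup>+x. h T x \<partial>itK KS s (bind_pmf \<mu> KS))"
      by (simp add: itK_Suc')
    also have "\<dots> \<le> (\<integral>\<^sup>+x. h (T + s) x \<partial>bind_pmf \<mu> KS)" by (rule Suc.IH)
    also have "\<dots> = (\<integral>\<^sup>+x. (\<integral>\<^sup>+y. h (T + s) y \<partial>KS x) \<partial>\<mu>)" by simp
    also have "\<dots> \<le> (\<integral>\<^sup>+x. h (Suc (T + s)) x \<partial>\<mu>)"
      by (rule nn_integral_mono) (rule c)
    finally show ?case by simp
  qed
  have e: "x \<in> D \<Longrightarrow> ennreal ((1 - q) ^ t) \<le> emeasure (itK K t (return_pmf x)) D" for t x
  proof (induction t arbitrary: x)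
    case 0 then show ?case by simp
  next
    case (Suc t)
    have "ennreal ((1 - q) ^ Suc t) = ennreal ((1 - q) ^ t) * ennreal (1 - q)"
      using q by (simp add: ennreal_mult[symmetric] mult.commute)
    also have "\<dots> \<le> ennreal ((1 - q) ^ t) * emeasure (K x) D"
      by (rule mult_left_mono[OF stay[OF Suc.prems]]) simp
    also have "\<dots> = (\<integral>\<^sup>+y. ennreal ((1 - q) ^ t) * indicator D y \<partial>K x)"
      by (simp add: nn_integral_cmult)
    also have "\<dots> \<le> (\<integral>\<^sup>+y. emeasure (itK K t (return_pmf y)) D \<partial>K x)"
      by (rule nn_integral_mono) (auto simp: indicator_def Suc.IH)
    also have "\<dots> = emeasure (itK K (Suc t) (return_pmf x)) D"
      by (simp add: itK_Suc_ret)
    finally show ?case .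
  qed
  have f: "indicator D x * ennreal (\<Sum>t<T. (1 - q) ^ t) \<le> h T x" for x
  proof (cases "x \<in> D")
    case True
    have "ennreal (\<Sum>t<T. (1 - q) ^ t) = (\<Sum>t<T. ennreal ((1 - q) ^ t))"
      using q by (subst sum_ennreal[symmetric]) auto
    also have "\<dots> \<le> h T x" unfolding h_def by (rule sum_mono) (rule e[OF True])
    finally show ?thesis using True by simp
  qed simp
  have "emeasure (itK KS s \<mu>) D * ennreal (\<Sum>t<T. (1 - q) ^ t)
      = (\<integral>\<^sup>+x. indicator D x * ennreal (\<Sum>t<T. (1 - q) ^ t) \<partial>itK KS s \<mu>)"
    by (simp add: nn_integral_multc)
  also have "\<dots> \<le> (\<integral>\<^sup>+x. h T x \<partial>itK KS s \<mu>)" by (rule nn_integral_mono) (rule f)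
  also have "\<dots> \<le> (\<integral>\<^sup>+x. h (T + s) x \<partial>\<mu>)" by (rule d)
  also have "\<dots> = (\<Sum>t<T + s. emeasure (itK K t \<mu>) D)" by (rule a[symmetric])
  finally show ?thesis unfolding KS_def .
qed

section \<open>Mutation\<close>

fun mf :: "real \<Rightarrow> bool list \<Rightarrow> bool list \<Rightarrow> real" where
  "mf p [] [] = 1"
| "mf p (a # as) (b # bs) = (if a = b then 1 - p else p) * mf p as bs"
| "mf p _ _ = 0"

fun hdist :: "bool list \<Rightarrow> bool list \<Rightarrow> nat" where
  "hdist (a # as) (b # bs) = (if a = b then 0 else 1) + hdist as bs"
| "hdist _ _ = 0"

lemma mutate_Cons: "mutate p (b # bs) =
  bind_pmf (bernoulli_pmf p) (\<lambda>f. map_pmf ((#) (if f then \<not> b else b)) (mutate p bs))"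
  by (simp add: map_pmf_def)

lemma pmf_map_Cons: "pmf (map_pmf ((#) c) M) y = (case y of [] \<Rightarrow> 0 | d # ys \<Rightarrow> if c = d then pmf M ys else 0)"
proof (cases y)
  case Nil
  then have "(#) c -` {y} = {}" by auto
  then show ?thesis using Nil by (simp add: pmf_map)
next
  case (Cons d ys)
  show ?thesis
  proof (cases "c = d")
    case True then show ?thesis using Cons by (simp add: pmf_map_inj')
  next
    case False
    then have "(#) c -` {y} = {}" using Cons by auto
    then show ?thesis using Cons False by (simp add: pmf_map)
  qed
qed

lemma pmf_mutate: "0 \<le> p \<Longrightarrow> p \<le> 1 \<Longrightarrow> pmf (mutate p x) y = mf p x y"
proof (induction x arbitrary: y)
  case Nil then show ?case by (cases y) auto
next
  case (Cons b bs)
  show ?case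
    using Cons by (cases y) (auto simp del: mutate.simps simp: mutate_Cons pmf_bind pmf_map_Cons)
qed

lemma set_pmf_mutate: "set_pmf (mutate p x) \<subseteq> {y. length y = length x}"
  by (induction x) auto

lemma map_drop_mutate: "map_pmf (drop a) (mutate p x) = mutate p (drop a x)"
proof (induction x arbitrary: a)
  case Nil then show ?case by simp
next
  case (Cons b bs)
  show ?case
  proof (cases a)
    case 0 then show ?thesis by (simp add: pmf.map_id0[unfolded id_def])
  next
    case (Suc a')
    have "map_pmf (drop a) (mutate p (b # bs)) =
      bind_pmf (bernoulli_pmf p) (\<lambda>f. map_pmf (drop a') (mutate p bs))"
      by (simp del: mutate.simps add: mutate_Cons map_bind_pmf pmf.map_comp o_def Suc)
    then show ?thesis using Cons Suc by (simp del: mutate.simps add: bind_pmf_const)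
  qed
qed

lemma map_take_mutate: "map_pmf (take a) (mutate p x) = mutate p (take a x)"
proof (induction x arbitrary: a)
  case Nil then show ?case by simp
next
  case (Cons b bs)
  show ?case
  proof (cases a)
    case 0 then show ?thesis by (simp add: map_pmf_const)
  next
    case (Suc a')
    have "map_pmf (take a) (mutate p (b # bs)) =
      bind_pmf (bernoulli_pmf p) (\<lambda>f. map_pmf ((#) (if f then \<not> b else b)) (map_pmf (take a') (mutate p bs)))"
      by (simp del: mutate.simps add: mutate_Cons map_bind_pmf pmf.map_comp o_def Suc)
    then show ?thesis using Cons Suc by (simp del: mutate.simps add: mutate_Cons)
  qed
qed

lemma mf_len: "length x \<noteq> length y \<Longrightarrow> mf p x y = 0"
  by (induction p x y rule: mf.induct) auto

lemma mf_append: "length a = length c \<Longrightarrow> mf p (a @ b) (c @ d) = mf p a c * mf p b d"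
  by (induction p a c rule: mf.induct) auto

lemma mf_Not: "mf p (map Not a) (map Not c) = mf p a c"
  by (induction p a c rule: mf.induct) auto

lemma hdist_le: "hdist x y \<le> length x"
  by (induction x y rule: hdist.induct) auto

lemma mf_hdist: "length x = length y \<Longrightarrow> mf p x y = p ^ hdist x y * (1 - p) ^ (length x - hdist x y)"
proof (induction p x y rule: mf.induct)
  case (2 p a as b bs)
  have "hdist as bs \<le> length as" by (rule hdist_le)
  then show ?case using 2 by (auto simp: Suc_diff_le)
qed auto

lemma hdist_append: "length a = length c \<Longrightarrow> hdist (a @ b) (c @ d) = hdist a c + hdist b d"
  by (induction a c rule: hdist.induct) auto

lemma hdist_self[simp]: "hdist x x = 0"
  by (induction x) auto

lemma hdist_rep: "hdist (replicate r False) (replicate r True) = r"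
  by (induction r) auto

section \<open>Blocks\<close>

definition lo :: "bool list \<Rightarrow> nat" where "lo x = length (takeWhile id x)"
definition blk :: "nat \<Rightarrow> nat \<Rightarrow> bool list \<Rightarrow> bool list" where "blk k i x = take k (drop (i * k) x)"
definition tr :: "nat \<Rightarrow> nat \<Rightarrow> bool list \<Rightarrow> bool list" where
  "tr k r z = take (k - r) z @ map Not (drop (k - r) z)"
definition TRAP :: "nat \<Rightarrow> nat \<Rightarrow> bool list" where
  "TRAP k r = replicate r False @ replicate (k - 2 * r) True @ replicate r False"
definition tau :: "nat \<Rightarrow> nat \<Rightarrow> bool list \<Rightarrow> bool list" where
  "tau k r z = map Not (drop (k - r) z) @ take (k - 2 * r) (drop r z) @ map Not (take r z)"
definition sig :: "nat \<Rightarrow> nat \<Rightarrow> nat \<Rightarrow> bool list \<Rightarrow> bool list" where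
  "sig k r m x = take (m * k) x @ tau k r (blk k m x) @ drop (m * k + k) x"
definition gnat :: "nat \<Rightarrow> nat \<Rightarrow> bool list \<Rightarrow> nat" where
  "gnat k r z = (if z = replicate k True then k + 2 else if z = TRAP k r then k + 1 else ones (tr k r z))"
definition PB :: "nat \<Rightarrow> bool list \<Rightarrow> nat" where "PB k x = lo x div k"
definition Fn :: "nat \<Rightarrow> nat \<Rightarrow> nat \<Rightarrow> bool list \<Rightarrow> nat" where
  "Fn n k r x = PB k x * (k + 2) + (if PB k x < n div k then gnat k r (blk k (PB k x) x) else 0)"

lemma lo_le: "lo x \<le> length x"
  unfolding lo_def by (rule length_takeWhile_le)

lemma lo_nth: "j < lo x \<Longrightarrow> x ! j"
  unfolding lo_def by (metis id_apply nth_mem set_takeWhileD takeWhile_nth)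

lemma lo_not: "lo x < length x \<Longrightarrow> \<not> x ! lo x"
  unfolding lo_def using nth_length_takeWhile by fastforce

lemma lo_ge_iff: "a \<le> length x \<Longrightarrow> (a \<le> lo x \<longleftrightarrow> (\<forall>j<a. x ! j))"
proof
  assume "a \<le> lo x" then show "\<forall>j<a. x ! j" using lo_nth by auto
next
  assume h: "a \<le> length x" "\<forall>j<a. x ! j"
  show "a \<le> lo x"
  proof (rule ccontr)
    assume "\<not> a \<le> lo x"
    then have "lo x < a" by simp
    then show False using h lo_not[of x] by auto
  qed
qed

lemma lo_take_eq:
  assumes "take a x = take a y" "lo x < a" "a \<le> length x" "a \<le> length y"
  shows "lo y = lo x"
proof -
  have eq: "j < a \<Longrightarrow> x ! j = y ! j" for j
    by (metis assms(1) nth_take)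
  have "\<forall>j<lo x. y ! j" using eq lo_nth assms(2) by (metis order.strict_trans)
  then have "lo x \<le> lo y"
    using lo_ge_iff[of "lo x" y] assms by (meson less_imp_le_nat order.strict_trans2)
  moreover have "\<not> y ! lo x" using eq[of "lo x"] assms lo_not[of x] by auto
  then have "lo y \<le> lo x" using lo_nth[of "lo x" y] by (meson not_le)
  ultimately show ?thesis by simp
qed

lemma lo_take_ge:
  assumes "take a x = take a y" "a \<le> length x" "a \<le> length y"
  shows "a \<le> lo x \<longleftrightarrow> a \<le> lo y"
proof -
  have eq: "j < a \<Longrightarrow> x ! j = y ! j" for j
    by (metis assms(1) nth_take)
  show ?thesis using lo_ge_iff[of a x] lo_ge_iff[of a y] assms eq by auto
qed

lemma length_blk: "(i + 1) * k \<le> length x \<Longrightarrow> length (blk k i x) = k"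
  unfolding blk_def by auto

lemma blk_nth: "j < k \<Longrightarrow> (i + 1) * k \<le> length x \<Longrightarrow> blk k i x ! j = x ! (i * k + j)"
  unfolding blk_def by auto

lemma blk_ones: "(i + 1) * k \<le> lo x \<Longrightarrow> blk k i x = replicate k True"
proof -
  assume h: "(i + 1) * k \<le> lo x"
  then have len: "(i + 1) * k \<le> length x" using lo_le order_trans by blast
  show ?thesis
  proof (rule nth_equalityI)
    show "length (blk k i x) = length (replicate k True)" using length_blk[OF len] by simp
    fix j assume "j < length (blk k i x)"
    then have j: "j < k" using length_blk[OF len] by simp
    have "i * k + j < lo x" using h j by (simp add: algebra_simps)
    then show "blk k i x ! j = replicate k True ! j"
      using blk_nth[OF j len] lo_nth j by simp
  qed
qed

lemma blk_ones_iff: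
  assumes "i * k \<le> lo x" "(i + 1) * k \<le> length x"
  shows "blk k i x = replicate k True \<longleftrightarrow> (i + 1) * k \<le> lo x"
proof
  assume b: "blk k i x = replicate k True"
  have "\<forall>j<(i + 1) * k. x ! j"
  proof (intro allI impI)
    fix j assume j: "j < (i + 1) * k"
    show "x ! j"
    proof (cases "j < i * k")
      case True then show ?thesis using assms lo_nth by auto
    next
      case False
      then have "j - i * k < k" using j by (simp add: algebra_simps)
      then have "blk k i x ! (j - i * k) = x ! j" using blk_nth[OF _ assms(2)] False by simp
      then show ?thesis using b \<open>j - i * k < k\<close> by simp
    qed
  qed
  then show "(i + 1) * k \<le> lo x" using lo_ge_iff[OF assms(2)] by blast
qed (rule blk_ones)

lemma split3:
  assumes "length z = k" "2 * r \<le> k"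
  shows "\<exists>z1 z2 z3. z = z1 @ z2 @ z3 \<and> length z1 = r \<and> length z2 = k - 2 * r \<and> length z3 = r"
proof (intro exI conjI)
  have "take (k - 2 * r) (drop r z) @ drop (k - r) z = drop r z"
  proof -
    have "drop (k - r) z = drop (k - 2 * r) (drop r z)" using assms by (simp add: algebra_simps)
    then show ?thesis by (metis append_take_drop_id)
  qed
  then show "z = take r z @ take (k - 2 * r) (drop r z) @ drop (k - r) z" by simp
qed (use assms in auto)

lemma tr_split:
  assumes "length z1 = r" "length z2 = k - 2 * r" "length z3 = r" "2 * r \<le> k"
  shows "tr k r (z1 @ z2 @ z3) = z1 @ z2 @ map Not z3"
proof -
  have "k - r = length z1 + length z2" using assms by simp
  then show ?thesis unfolding tr_def by simp
qed

lemma tau_split: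
  assumes "length z1 = r" "length z2 = k - 2 * r" "length z3 = r" "2 * r \<le> k"
  shows "tau k r (z1 @ z2 @ z3) = map Not z3 @ z2 @ map Not z1"
proof -
  have "k - r = length z1 + length z2" using assms by simp
  then show ?thesis unfolding tau_def using assms by simp
qed

lemma rep3: "2 * r \<le> k \<Longrightarrow> replicate k b = replicate r b @ replicate (k - 2 * r) b @ replicate r b"
proof -
  assume "2 * r \<le> k"
  then have "k = r + (k - 2 * r) + r" by simp
  then have "replicate k b = replicate (r + (k - 2 * r) + r) b" by (rule arg_cong)
  then show ?thesis by (simp only: replicate_add append_assoc)
qed

lemma rep2: "2 * r \<le> k \<Longrightarrow> replicate (k - r) b = replicate (k - 2 * r) b @ replicate r b"
proof -
  assume "2 * r \<le> k"
  then have "k - r = (k - 2 * r) + r" by simp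
  then have "replicate (k - r) b = replicate ((k - 2 * r) + r) b" by (rule arg_cong)
  then show ?thesis by (simp only: replicate_add)
qed

lemma rep2': "2 * r \<le> k \<Longrightarrow> replicate (k - r) b = replicate r b @ replicate (k - 2 * r) b"
proof -
  assume "2 * r \<le> k"
  then have "k - r = r + (k - 2 * r)" by simp
  then have "replicate (k - r) b = replicate (r + (k - 2 * r)) b" by (rule arg_cong)
  then show ?thesis by (simp only: replicate_add)
qed

lemma ONES_split: "2 * r \<le> k \<Longrightarrow> replicate k True = replicate r True @ replicate (k - 2 * r) True @ replicate r True"
  by (rule rep3)

lemma length_TRAP: "2 * r \<le> k \<Longrightarrow> length (TRAP k r) = k"
  unfolding TRAP_def by simp

lemma map_Not_rep: "map Not (replicate n b) = replicate n (\<not> b)"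
  by simp

lemma map_Not_eq_iff: "map Not a = c \<longleftrightarrow> a = map Not c"
proof
  assume "map Not a = c" then show "a = map Not c" by (auto simp: map_map comp_def)
next
  assume "a = map Not c" then show "map Not a = c" by (auto simp: map_map comp_def)
qed

lemma tau_TRAP: "2 * r \<le> k \<Longrightarrow> tau k r (TRAP k r) = replicate k True"
  unfolding TRAP_def by (subst tau_split) (auto simp: ONES_split)

lemma tau_ONES: "2 * r \<le> k \<Longrightarrow> tau k r (replicate k True) = TRAP k r"
  unfolding TRAP_def by (subst ONES_split, assumption, subst tau_split) auto

lemma tau_tau: "length z = k \<Longrightarrow> 2 * r \<le> k \<Longrightarrow> tau k r (tau k r z) = z"
proof -
  assume a: "length z = k" "2 * r \<le> k"
  obtain z1 z2 z3 where z: "z = z1 @ z2 @ z3" "length z1 = r" "length z2 = k - 2 * r" "length z3 = r"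
    using split3[OF a] by blast
  show ?thesis unfolding z(1) using z(2-4) a(2) by (simp add: tau_split comp_def)
qed

lemma length_tau: "length z = k \<Longrightarrow> 2 * r \<le> k \<Longrightarrow> length (tau k r z) = k"
proof -
  assume a: "length z = k" "2 * r \<le> k"
  obtain z1 z2 z3 where z: "z = z1 @ z2 @ z3" "length z1 = r" "length z2 = k - 2 * r" "length z3 = r"
    using split3[OF a] by blast
  show ?thesis unfolding z(1) using z(2-4) a(2) by (simp add: tau_split comp_def)
qed

lemma ones_append[simp]: "ones (a @ b) = ones a + ones b"
  unfolding ones_def by simp

lemma ones_le: "ones a \<le> length a"
  unfolding ones_def by simp

lemma length_tr: "length (tr k r z) = length z"
  unfolding tr_def by simp

lemma ones_tr_tau: "length z = k \<Longrightarrow> 2 * r \<le> k \<Longrightarrow> ones (tr k r (tau k r z)) = ones (tr k r z)"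
proof -
  assume a: "length z = k" "2 * r \<le> k"
  obtain z1 z2 z3 where z: "z = z1 @ z2 @ z3" "length z1 = r" "length z2 = k - 2 * r" "length z3 = r"
    using split3[OF a] by blast
  show ?thesis unfolding z(1) using z(2-4) a(2) by (simp add: tau_split tr_split comp_def)
qed

lemma tr_TRAP_iff:
  assumes "length z = k" "2 * r \<le> k"
  shows "tr k r z = replicate r False @ replicate (k - r) True \<longleftrightarrow> z = TRAP k r"
proof -
  obtain z1 z2 z3 where z: "z = z1 @ z2 @ z3" "length z1 = r" "length z2 = k - 2 * r" "length z3 = r"
    using split3[OF assms] by blast
  have e: "replicate (k - r) True = replicate (k - 2 * r) True @ replicate r True"
    using assms(2) by (rule rep2)
  show ?thesis
    unfolding z(1) tr_split[OF z(2-4) assms(2)] TRAP_def e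
    using z(2-4) by (simp add: map_Not_eq_iff)
qed

lemma tr_ONES_iff:
  assumes "length z = k" "2 * r \<le> k"
  shows "tr k r z = replicate (k - r) True @ replicate r False \<longleftrightarrow> z = replicate k True"
proof -
  obtain z1 z2 z3 where z: "z = z1 @ z2 @ z3" "length z1 = r" "length z2 = k - 2 * r" "length z3 = r"
    using split3[OF assms] by blast
  have e: "replicate (k - r) True = replicate r True @ replicate (k - 2 * r) True"
    using assms(2) by (rule rep2')
  show ?thesis
    unfolding z(1) tr_split[OF z(2-4) assms(2)] ONES_split[OF assms(2)] e
    using z(2-4) by (simp add: map_Not_eq_iff)
qed

lemma gblock_gnat:
  assumes "length z = k" "2 * r \<le> k" "1 \<le> r"
  shows "gblock k r z = real (gnat k r z)"
proof -
  have ne: "replicate (k - r) True @ replicate r False \<noteq> replicate r False @ replicate (k - r) True"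
  proof
    assume h: "replicate (k - r) True @ replicate r False = replicate r False @ replicate (k - r) True"
    have "(replicate (k - r) True @ replicate r False) ! 0 = True" using assms by (simp add: nth_append)
    moreover have "(replicate r False @ replicate (k - r) True) ! 0 = False" using assms by (simp add: nth_append)
    ultimately show False using h by simp
  qed
  have ne2: "replicate k True \<noteq> TRAP k r"
  proof
    assume h: "replicate k True = TRAP k r"
    have "TRAP k r ! 0 = False" using assms by (simp add: TRAP_def nth_append)
    moreover have "replicate k True ! 0 = True" using assms by simp
    ultimately show False using h by simp
  qed
  show ?thesis
    unfolding gblock_def gnat_def fork_def
    using tr_TRAP_iff[OF assms(1,2)] tr_ONES_iff[OF assms(1,2)] ne ne2
    by (fold tr_def) auto
qed

lemma gnat_le:
  assumes "length z = k" "z \<noteq> replicate k True"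
  shows "gnat k r z \<le> k + 1"
  using assms ones_le[of "tr k r z"] by (auto simp: gnat_def length_tr)

lemma gnat_k1:
  assumes "length z = k" "z \<noteq> replicate k True" "gnat k r z = k + 1"
  shows "z = TRAP k r"
  using assms ones_le[of "tr k r z"] by (auto simp: gnat_def length_tr split: if_splits)

lemma gnat_tau:
  assumes "length z = k" "2 * r \<le> k" "z \<noteq> replicate k True" "z \<noteq> TRAP k r"
  shows "gnat k r (tau k r z) = gnat k r z" "tau k r z \<noteq> replicate k True" "tau k r z \<noteq> TRAP k r"
proof -
  show a: "tau k r z \<noteq> replicate k True"
    using assms tau_tau[OF assms(1,2)] tau_ONES[OF assms(2)] by metis
  show b: "tau k r z \<noteq> TRAP k r"
    using assms tau_tau[OF assms(1,2)] tau_TRAP[OF assms(2)] by metis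
  show "gnat k r (tau k r z) = gnat k r z"
    using a b assms ones_tr_tau[OF assms(1,2)] by (simp add: gnat_def)
qed

section \<open>The fitness function\<close>

lemma sum_lemma:
  "P \<le> N \<Longrightarrow> (\<Sum>i<N. if i < P then a else if i = P then b else 0) = real P * a + (if P < N then b else (0::real))"
proof (induction N)
  case 0 then show ?case by simp
next
  case (Suc N)
  show ?case
  proof (cases "P \<le> N")
    case True
    then show ?thesis using Suc by (auto simp: algebra_simps)
  next
    case False
    then have "P = Suc N" using Suc by simp
    moreover have "(\<Sum>i<N. if i < Suc N then a else if i = Suc N then b else 0) = real N * a"
      by simp
    ultimately show ?thesis by (simp add: algebra_simps)
  qed
qed

lemma prod_ind:
  assumes "a \<le> length x"
  shows "(\<Prod>j<a. if x ! j then 1 else 0 :: real) = (if a \<le> lo x then 1 else 0)"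
proof (cases "a \<le> lo x")
  case True
  then show ?thesis using lo_nth by (auto intro!: prod.neutral)
next
  case False
  then have "lo x < a" by simp
  then have "\<not> x ! lo x" using assms lo_not by simp
  then show ?thesis using False \<open>lo x < a\<close> by (auto intro!: prod_zero bexI[of _ "lo x"])
qed

locale setting =
  fixes n k r :: nat
  assumes kpos: "0 < k" and kdvd: "k dvd n" and r1: "1 \<le> r" and kr: "2 * r \<le> k"
begin

abbreviation "N \<equiv> n div k"

lemma Nk: "N * k = n" using kdvd by simp

lemma PB_le: "length x = n \<Longrightarrow> PB k x \<le> N"
  unfolding PB_def using lo_le[of x] by (simp add: div_le_mono)

lemma lo_lt: "lo x < (PB k x + 1) * k"
proof -
  have "lo x div k * k + lo x mod k = lo x" by (rule div_mult_mod_eq)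
  moreover have "lo x mod k < k" using kpos by simp
  moreover have "(lo x div k + 1) * k = lo x div k * k + k" by simp
  ultimately show ?thesis unfolding PB_def by linarith
qed

lemma PB_ge: "PB k x * k \<le> lo x"
  unfolding PB_def by (simp add: div_times_less_eq_dividend)

lemma blk_len: "length x = n \<Longrightarrow> i < N \<Longrightarrow> length (blk k i x) = k"
proof -
  assume "length x = n" "i < N"
  then have "(i + 1) * k \<le> n" using Nk by (metis Suc_eq_plus1 Suc_leI mult_le_mono1)
  then show ?thesis using \<open>length x = n\<close> by (simp add: length_blk)
qed

lemma blk_bound: "i < N \<Longrightarrow> (i + 1) * k \<le> n"
  using Nk by (metis Suc_eq_plus1 Suc_leI mult_le_mono1)

lemma lo_fork_Fn:
  assumes "length x = n"
  shows "lo_fork n k r x = real (Fn n k r x)"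
proof -
  let ?P = "PB k x"
  have "lo_fork n k r x = (\<Sum>i<N. if i < ?P then real (k + 2) else if i = ?P then real (gnat k r (blk k ?P x)) else 0)"
    unfolding lo_fork_def
  proof (rule sum.cong[OF refl])
    fix i assume "i \<in> {..<N}"
    then have i: "i < N" by simp
    have ik: "i * k \<le> length x" using blk_bound[OF i] assms by simp
    have pr: "(\<Prod>j<i * k. if x ! j then 1 else 0 :: real) = (if i \<le> ?P then 1 else 0)"
      unfolding prod_ind[OF ik] PB_def using kpos by (simp add: less_eq_div_iff_mult_less_eq)
    have g: "gblock k r (take k (drop (i * k) x)) = real (gnat k r (blk k i x))"
      using gblock_gnat[OF blk_len[OF assms i] kr r1] unfolding blk_def .
    have o: "i < ?P \<Longrightarrow> blk k i x = replicate k True"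
    proof (rule blk_ones)
      assume "i < ?P"
      then have "(i + 1) * k \<le> ?P * k" using mult_le_mono1[of "Suc i" ?P k] by simp
      then show "(i + 1) * k \<le> lo x" using PB_ge order_trans by blast
    qed
    show "gblock k r (take k (drop (i * k) x)) * (\<Prod>j<i * k. if x ! j then 1 else 0) =
      (if i < ?P then real (k + 2) else if i = ?P then real (gnat k r (blk k ?P x)) else 0)"
      unfolding pr g using o by (auto simp: gnat_def)
  qed
  also have "\<dots> = real ?P * real (k + 2) + (if ?P < N then real (gnat k r (blk k ?P x)) else 0)"
    by (rule sum_lemma[OF PB_le[OF assms]])
  also have "\<dots> = real (Fn n k r x)" unfolding Fn_def by (simp add: algebra_simps)
  finally show ?thesis .
qed

lemma PB_N_iff:
  assumes "length x = n"
  shows "PB k x = N \<longleftrightarrow> x = replicate n True"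
proof
  assume "PB k x = N"
  then have "n \<le> lo x" using PB_ge Nk by metis
  then have "\<forall>j<n. x ! j" using lo_nth by (meson order.strict_trans2)
  then show "x = replicate n True" using assms by (simp add: list_eq_iff_nth_eq)
next
  assume "x = replicate n True"
  then have "lo x = n" unfolding lo_def by simp
  then show "PB k x = N" unfolding PB_def by simp
qed

lemma PB_blk_ne:
  assumes "length x = n" "PB k x < N"
  shows "blk k (PB k x) x \<noteq> replicate k True"
  using blk_ones_iff[of "PB k x" k x] PB_ge[of x] lo_lt[of x] blk_bound[OF assms(2)] assms(1)
  by auto

lemma Fn_upper:
  assumes "length x = n" "PB k x < N"
  shows "Fn n k r x \<le> PB k x * (k + 2) + (k + 1)"
  using gnat_le[OF blk_len[OF assms] PB_blk_ne[OF assms], of r] assms unfolding Fn_def by simp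

lemma Fn_lower: "PB k x * (k + 2) \<le> Fn n k r x"
  unfolding Fn_def by simp

lemma Fn_lt_PB:
  assumes "length x = n" "length y = n" "PB k x < PB k y"
  shows "Fn n k r x < Fn n k r y"
proof -
  have "PB k x < N" using assms PB_le[OF assms(2)] by simp
  then have "Fn n k r x < (PB k x + 1) * (k + 2)" using Fn_upper[OF assms(1)] by simp
  also have "\<dots> \<le> PB k y * (k + 2)" using assms(3) by (intro mult_le_mono1) simp
  also have "\<dots> \<le> Fn n k r y" by (rule Fn_lower)
  finally show ?thesis .
qed

lemma Fn_ge_PB:
  assumes "length x = n" "length y = n" "Fn n k r x \<le> Fn n k r y"
  shows "PB k x \<le> PB k y"
  using Fn_lt_PB[OF assms(2,1)] assms(3) by (meson leD le_less_linear)

lemma Fn_same_PB: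
  assumes "PB k x = PB k y" "PB k x < N"
  shows "Fn n k r x \<le> Fn n k r y \<longleftrightarrow> gnat k r (blk k (PB k x) x) \<le> gnat k r (blk k (PB k y) y)"
    "Fn n k r x < Fn n k r y \<longleftrightarrow> gnat k r (blk k (PB k x) x) < gnat k r (blk k (PB k y) y)"
  using assms unfolding Fn_def by auto


lemma decomp: "a + k \<le> length x \<Longrightarrow> take a x @ take k (drop a x) @ drop (a + k) x = x"
  by (metis append.assoc append_take_drop_id drop_drop take_add add.commute)

lemma repl:
  assumes "length x = n" "P < N" "length w = k"
  shows "length (take (P*k) x @ w @ drop (P*k+k) x) = n"
    "blk k P (take (P*k) x @ w @ drop (P*k+k) x) = w"
    "take (P*k) (take (P*k) x @ w @ drop (P*k+k) x) = take (P*k) x"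
    "hdist x (take (P*k) x @ w @ drop (P*k+k) x) = hdist (blk k P x) w"
    "P*k \<le> lo x \<Longrightarrow> P*k \<le> lo (take (P*k) x @ w @ drop (P*k+k) x)"
proof -
  have b: "P * k + k \<le> n" using blk_bound[OF assms(2)] by (simp add: algebra_simps)
  show l: "length (take (P*k) x @ w @ drop (P*k+k) x) = n" using assms b by simp
  show "blk k P (take (P*k) x @ w @ drop (P*k+k) x) = w" unfolding blk_def using assms b by simp
  show t: "take (P*k) (take (P*k) x @ w @ drop (P*k+k) x) = take (P*k) x" using assms b by simp
  have x: "x = take (P*k) x @ blk k P x @ drop (P*k+k) x"
    unfolding blk_def using decomp[of "P*k" x] assms b by (simp add: mult.commute)
  have "hdist x (take (P*k) x @ w @ drop (P*k+k) x) =
      hdist (take (P*k) x @ blk k P x @ drop (P*k+k) x) (take (P*k) x @ w @ drop (P*k+k) x)"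
    using x by simp
  also have "\<dots> = hdist (blk k P x) w"
    using assms b by (simp add: hdist_append blk_len length_blk)
  finally show "hdist x (take (P*k) x @ w @ drop (P*k+k) x) = hdist (blk k P x) w" .
  show "P*k \<le> lo x \<Longrightarrow> P*k \<le> lo (take (P*k) x @ w @ drop (P*k+k) x)"
    using lo_take_ge[OF t[symmetric]] l assms b by simp
qed

end

lemma hdist_upd: "j < length z \<Longrightarrow> hdist z (z[j := \<not> z ! j]) = 1"
proof (induction z arbitrary: j)
  case (Cons a z)
  then show ?case by (cases j) auto
qed simp

lemma ones_upd: "j < length t \<Longrightarrow> \<not> t ! j \<Longrightarrow> ones (t[j := True]) = ones t + 1"
proof (induction t arbitrary: j)
  case (Cons a t)
  then show ?case by (cases j) (auto simp: ones_def)
qed simp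

lemma ones_all: "ones t = length t \<Longrightarrow> t = replicate (length t) True"
proof (induction t)
  case (Cons a t)
  have le: "length (filter id t) \<le> length t" by (rule length_filter_le)
  show ?case
  proof (cases a)
    case True then show ?thesis using Cons by (auto simp: ones_def)
  next
    case False then show ?thesis using Cons.prems le by (simp add: ones_def)
  qed
qed simp

lemma tr_nth: "i < length z \<Longrightarrow> tr k r z ! i = (if i < k - r then z ! i else \<not> z ! i)"
  unfolding tr_def by (auto simp: nth_append min_def)

lemma tr_upd:
  assumes "j < length z"
  shows "tr k r (z[j := \<not> z ! j]) = (tr k r z)[j := \<not> (tr k r z ! j)]"
proof (rule nth_equalityI)
  show "length (tr k r (z[j := \<not> z ! j])) = length ((tr k r z)[j := \<not> (tr k r z ! j)])"
    by (simp add: length_tr)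
  fix i assume "i < length (tr k r (z[j := \<not> z ! j]))"
  then have i: "i < length z" by (simp add: length_tr)
  show "tr k r (z[j := \<not> z ! j]) ! i = (tr k r z)[j := \<not> (tr k r z ! j)] ! i"
    using i assms by (auto simp: tr_nth length_tr nth_list_update)
qed

lemma tr_tr: "length z = k \<Longrightarrow> 2 * r \<le> k \<Longrightarrow> tr k r (tr k r z) = z"
proof -
  assume a: "length z = k" "2 * r \<le> k"
  obtain z1 z2 z3 where z: "z = z1 @ z2 @ z3" "length z1 = r" "length z2 = k - 2 * r" "length z3 = r"
    using split3[OF a] by blast
  show ?thesis unfolding z(1) using z(2-4) a(2) by (simp add: tr_split comp_def)
qed

lemma hdist_TRAP: "2 * r \<le> k \<Longrightarrow> hdist (TRAP k r) (replicate k True) = 2 * r"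
  unfolding TRAP_def by (subst rep3[of r k True], assumption) (simp add: hdist_append hdist_rep)

lemma tr_ONES: "2 * r \<le> k \<Longrightarrow> tr k r (replicate k True) = replicate (k - r) True @ replicate r False"
proof -
  assume a: "2 * r \<le> k"
  have "tr k r (replicate k True) = replicate r True @ replicate (k - 2 * r) True @ replicate r False"
    by (subst rep3[of r k True], rule a, subst tr_split) (use a in auto)
  also have "\<dots> = replicate (k - r) True @ replicate r False"
    using rep2'[OF a, of True] by simp
  finally show ?thesis .
qed

lemma hdist_kr: "r \<le> k \<Longrightarrow> hdist (replicate (k - r) True @ replicate r False) (replicate k True) = r"
proof -
  assume "r \<le> k"
  then have "replicate k True = replicate (k - r) True @ replicate r True"
    by (metis le_add_diff_inverse2 replicate_add)
  then show ?thesis by (simp add: hdist_append hdist_rep)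
qed


lemma ones_all_true: "(\<forall>j<length t. t ! j) \<Longrightarrow> ones t = length t"
  unfolding ones_def by (metis filter_True id_apply in_set_conv_nth)

context setting
begin

lemma PB_eq: "P * k \<le> lo y \<Longrightarrow> lo y < (P + 1) * k \<Longrightarrow> PB k y = P"
  unfolding PB_def using kpos
  by (metis add.commute less_eq_div_iff_mult_less_eq div_less_iff_less_mult le_antisym
      less_Suc_eq_le plus_1_eq_Suc)

lemma PB_gt: "(P + 1) * k \<le> lo y \<Longrightarrow> P < PB k y"
  unfolding PB_def using kpos less_eq_div_iff_mult_less_eq by (metis Suc_eq_plus1 Suc_le_eq)

lemma target:
  assumes x: "length x = n" and P: "PB k x < N"
  defines "z \<equiv> blk k (PB k x) x"
  shows "\<exists>y. length y = n \<and> Fn n k r x < Fn n k r y \<and>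
     hdist x y = (if gnat k r z = k + 1 then 2 * r else if gnat k r z = k then r else 1)"
proof -
  let ?P = "PB k x"
  have lz: "length z = k" unfolding z_def by (rule blk_len[OF x P])
  have zne: "z \<noteq> replicate k True" unfolding z_def by (rule PB_blk_ne[OF x P])
  have lox: "?P * k \<le> lo x" by (rule PB_ge)
  have bb: "(?P + 1) * k \<le> n" by (rule blk_bound[OF P])
  define Y where "Y w = take (?P*k) x @ w @ drop (?P*k+k) x" for w
  have Y: "length w = k \<Longrightarrow> length (Y w) = n \<and> blk k ?P (Y w) = w \<and> hdist x (Y w) = hdist z w \<and> ?P * k \<le> lo (Y w)" for w
    unfolding Y_def z_def using repl[OF x P, of w] lox by simp
  have onesY: "Fn n k r x < Fn n k r (Y (replicate k True))"
  proof -
    have "blk k ?P (Y (replicate k True)) = replicate k True" "?P * k \<le> lo (Y (replicate k True))"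
      "length (Y (replicate k True)) = n" using Y[of "replicate k True"] by auto
    then have "(?P + 1) * k \<le> lo (Y (replicate k True))" using blk_ones_iff bb by metis
    then have "?P < PB k (Y (replicate k True))" by (rule PB_gt)
    then show ?thesis using Fn_lt_PB x Y[of "replicate k True"] by simp
  qed
  have gle: "gnat k r z \<le> k + 1" by (rule gnat_le[OF lz zne])
  show ?thesis
  proof (cases "gnat k r z = k + 1")
    case True
    then have "z = TRAP k r" using gnat_k1[OF lz zne] by simp
    then have "hdist z (replicate k True) = 2 * r" using hdist_TRAP kr by simp
    then show ?thesis using True onesY Y[of "replicate k True"] by (intro exI[of _ "Y (replicate k True)"]) simp
  next
    case False
    then have zt: "z \<noteq> TRAP k r" unfolding gnat_def using zne by auto
    then have gz: "gnat k r z = ones (tr k r z)" unfolding gnat_def using zne by simp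
    show ?thesis
    proof (cases "gnat k r z = k")
      case True
      then have "ones (tr k r z) = length (tr k r z)" using gz lz by (simp add: length_tr)
      then have "tr k r z = replicate k True" using ones_all lz by (metis length_tr)
      then have "z = replicate (k - r) True @ replicate r False"
        using tr_tr[OF lz kr] tr_ONES[OF kr] by metis
      then have "hdist z (replicate k True) = r" using hdist_kr kr by simp
      then show ?thesis using True False onesY Y[of "replicate k True"]
        by (intro exI[of _ "Y (replicate k True)"]) simp
    next
      case False2: False
      have "ones (tr k r z) < k" using gz gle False False2 by simp
      then obtain j where j: "j < k" "\<not> tr k r z ! j"
        using ones_all_true[of "tr k r z"] lz by (auto simp: length_tr)
      define z' where "z' = z[j := \<not> z ! j]"
      have lz': "length z' = k" unfolding z'_def using lz by simp
      have hd1: "hdist z z' = 1" unfolding z'_def using hdist_upd j lz by simp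
      have YY: "length (Y z') = n" "blk k ?P (Y z') = z'" "?P * k \<le> lo (Y z')" "hdist x (Y z') = 1"
        using Y[OF lz'] hd1 by auto
      have "Fn n k r x < Fn n k r (Y z')"
      proof (cases "z' = replicate k True")
        case True
        then have "(?P + 1) * k \<le> lo (Y z')" using blk_ones_iff bb YY by metis
        then have "?P < PB k (Y z')" by (rule PB_gt)
        then show ?thesis using Fn_lt_PB x YY by simp
      next
        case zo: False
        then have "\<not> (?P + 1) * k \<le> lo (Y z')" using blk_ones_iff bb YY by metis
        then have pe: "PB k (Y z') = ?P" using PB_eq YY by simp
        have "gnat k r z < gnat k r z'"
        proof (cases "z' = TRAP k r")
          case True
          then show ?thesis using zo gz \<open>ones (tr k r z) < k\<close> by (simp add: gnat_def)
        next
          case False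
          have "tr k r z' = (tr k r z)[j := True]"
            unfolding z'_def using tr_upd[of j z k r] j lz by simp
          then have "ones (tr k r z') = ones (tr k r z) + 1"
            using ones_upd[of j "tr k r z"] j lz by (simp add: length_tr)
          then show ?thesis using zo False gz by (simp add: gnat_def)
        qed
        then show ?thesis using Fn_same_PB(2)[of x "Y z'"] pe P YY unfolding z_def by simp
      qed
      then show ?thesis using YY False False2 by (intro exI[of _ "Y z'"]) simp
    qed
  qed
qed

end


context setting
begin

definition rho :: real where "rho = (1 - 1 / real n) ^ n"
definition st :: "nat \<Rightarrow> real" where
  "st v = real n ^ (if v = k + 1 then 2 * r else if v = k then r else 1) / rho"
definition CC :: "nat \<Rightarrow> real" where
  "CC v = (if v = k + 1 then real n ^ (2 * r) / rho
     else real (k - v) * (real n / rho) + real n ^ r / rho + real n ^ (2 * r) / rho)"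
definition BB :: real where "BB = real k * (real n / rho) + real n ^ r / rho + real n ^ (2 * r) / rho"
definition Vr :: "bool list \<Rightarrow> real" where
  "Vr x = (if PB k x < N then real (N - PB k x - 1) * BB + CC (gnat k r (blk k (PB k x) x)) else 0)"

lemma rho_pos: "2 \<le> n \<Longrightarrow> 0 < rho"
  unfolding rho_def by simp

lemma CC_facts:
  assumes "2 \<le> n" "v \<le> k + 1"
  shows "0 \<le> CC v" "CC v \<le> BB" "st v \<le> CC v"
proof -
  have rp: "0 < rho" using rho_pos[OF assms(1)] .
  have a: "0 \<le> real n / rho" "0 \<le> real n ^ r / rho" "0 \<le> real n ^ (2 * r) / rho" using rp by auto
  have "0 \<le> real (k - v) * (real n / rho)" using a(1) by (intro mult_nonneg_nonneg) auto
  then show "0 \<le> CC v" unfolding CC_def using a by auto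
  have "real (k - v) \<le> real k" by simp
  then have "real (k - v) * (real n / rho) \<le> real k * (real n / rho)" using a(1) by (rule mult_right_mono)
  then show "CC v \<le> BB" unfolding CC_def BB_def using a by auto
  show "st v \<le> CC v"
  proof (cases "v = k + 1")
    case True then show ?thesis unfolding st_def CC_def by simp
  next
    case False
    show ?thesis
    proof (cases "v = k")
      case True then show ?thesis unfolding st_def CC_def using a by simp
    next
      case False2: False
      then have "1 \<le> real (k - v)" using False assms by simp
      then have "real n / rho \<le> real (k - v) * (real n / rho)"
        using mult_right_mono[OF _ a(1), of 1 "real (k - v)"] by simp
      then show ?thesis unfolding st_def CC_def using a False False2 by simp
    qed
  qed
qed

lemma CC_mono:
  assumes "2 \<le> n" "v \<le> w" "w \<le> k + 1"
  shows "CC w \<le> CC v" "v < w \<Longrightarrow> CC w + st v \<le> CC v"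
proof -
  have rp: "0 < rho" using rho_pos[OF assms(1)] .
  have a: "0 \<le> real n / rho" "0 \<le> real n ^ r / rho" "0 \<le> real n ^ (2 * r) / rho" using rp by auto
  show "v < w \<Longrightarrow> CC w + st v \<le> CC v"
  proof -
    assume vw: "v < w"
    show ?thesis
    proof (cases "w = k + 1")
      case True
      show ?thesis
      proof (cases "v = k")
        case True then show ?thesis using \<open>w = k + 1\<close> unfolding CC_def st_def by simp
      next
        case False
        then have "v < k" using vw True by simp
        then have "1 \<le> real (k - v)" by simp
        then have "real n / rho \<le> real (k - v) * (real n / rho)"
          using mult_right_mono[OF _ a(1), of 1 "real (k - v)"] by simp
        then show ?thesis using True False \<open>v < k\<close> a unfolding CC_def st_def by simp
      qed
    next
      case False
      then have "w \<le> k" "v < k" using assms vw by auto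
      then have "real (k - w) + 1 \<le> real (k - v)" using vw by simp
      then have "(real (k - w) + 1) * (real n / rho) \<le> real (k - v) * (real n / rho)"
        using a(1) by (rule mult_right_mono)
      then have m: "real (k - w) * (real n / rho) + real n / rho \<le> real (k - v) * (real n / rho)"
        by (simp only: distrib_right mult_1_left)
      have e1: "CC w = real (k - w) * (real n / rho) + real n ^ r / rho + real n ^ (2 * r) / rho"
        unfolding CC_def using False by simp
      have e2: "CC v = real (k - v) * (real n / rho) + real n ^ r / rho + real n ^ (2 * r) / rho"
        unfolding CC_def using \<open>v < k\<close> by simp
      have e3: "st v = real n / rho" unfolding st_def using \<open>v < k\<close> by simp
      show ?thesis unfolding e1 e2 e3 using m by linarith
    qed
  qed
  show "CC w \<le> CC v"
  proof (cases "v = w")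
    case False
    then have "v < w" using assms by simp
    then have "CC w + st v \<le> CC v" by (rule \<open>v < w \<Longrightarrow> CC w + st v \<le> CC v\<close>)
    moreover have "0 \<le> st v" unfolding st_def using rp by simp
    ultimately show ?thesis by simp
  qed simp
qed

lemma Vr_bounds:
  assumes "2 \<le> n" "length x = n"
  shows "0 \<le> Vr x" "Vr x \<le> real N * BB"
proof -
  have rp: "0 < rho" using rho_pos[OF assms(1)] .
  have B0: "0 \<le> BB" unfolding BB_def using rp by simp
  show "0 \<le> Vr x"
  proof (cases "PB k x < N")
    case True
    then show ?thesis unfolding Vr_def using B0
      CC_facts(1)[OF assms(1) gnat_le[OF blk_len[OF assms(2) True] PB_blk_ne[OF assms(2) True]]] by simp
  qed (simp add: Vr_def)
  show "Vr x \<le> real N * BB"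
  proof (cases "PB k x < N")
    case True
    have "CC (gnat k r (blk k (PB k x) x)) \<le> BB"
      using CC_facts(2)[OF assms(1) gnat_le[OF blk_len[OF assms(2) True] PB_blk_ne[OF assms(2) True]]] .
    moreover have "real (N - PB k x - 1) * BB + BB \<le> real N * BB"
    proof -
      have "real (N - PB k x - 1) + 1 \<le> real N" using True by linarith
      then have "(real (N - PB k x - 1) + 1) * BB \<le> real N * BB" using B0 by (rule mult_right_mono)
      then show ?thesis by (simp add: algebra_simps)
    qed
    ultimately show ?thesis unfolding Vr_def using True by simp
  qed (use B0 in \<open>simp add: Vr_def\<close>)
qed

lemma Vr_drift:
  assumes n2: "2 \<le> n" and x: "length x = n" and y: "length y = n" and P: "PB k x < N"
    and le: "Fn n k r x \<le> Fn n k r y"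
  shows "Vr y \<le> Vr x" "Fn n k r x < Fn n k r y \<Longrightarrow> Vr y + st (gnat k r (blk k (PB k x) x)) \<le> Vr x"
proof -
  have rp: "0 < rho" using rho_pos[OF n2] .
  have B0: "0 \<le> BB" unfolding BB_def using rp by simp
  define v where "v = gnat k r (blk k (PB k x) x)"
  have vle: "v \<le> k + 1" unfolding v_def by (rule gnat_le[OF blk_len[OF x P] PB_blk_ne[OF x P]])
  have st0: "0 \<le> st v" unfolding st_def using rp by simp
  have Vx: "Vr x = real (N - PB k x - 1) * BB + CC v" unfolding Vr_def v_def using P by simp
  have PQ: "PB k x \<le> PB k y" by (rule Fn_ge_PB[OF x y le])
  have main: "Vr y + (if Fn n k r x < Fn n k r y then st v else 0) \<le> Vr x"
  proof (cases "PB k y < N")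
    case False
    then have "Vr y = 0" unfolding Vr_def by simp
    moreover have "st v \<le> CC v" using CC_facts(3)[OF n2 vle] .
    moreover have "0 \<le> real (N - PB k x - 1) * BB" using B0 by simp
    ultimately show ?thesis using Vx st0 by auto
  next
    case Q: True
    define w where "w = gnat k r (blk k (PB k y) y)"
    have wle: "w \<le> k + 1" unfolding w_def by (rule gnat_le[OF blk_len[OF y Q] PB_blk_ne[OF y Q]])
    have Vy: "Vr y = real (N - PB k y - 1) * BB + CC w" unfolding Vr_def w_def using Q by simp
    show ?thesis
    proof (cases "PB k x = PB k y")
      case True
      have vw: "v \<le> w" using Fn_same_PB(1)[OF True P] le unfolding v_def w_def using True by simp
      have "Fn n k r x < Fn n k r y \<Longrightarrow> v < w"
        using Fn_same_PB(2)[OF True P] unfolding v_def w_def using True by simp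
      then show ?thesis using CC_mono[OF n2 vw wle] Vx Vy True by auto
    next
      case False
      then have lt: "PB k x < PB k y" using PQ by simp
      have "CC w \<le> BB" using CC_facts(2)[OF n2 wle] .
      moreover have "real (N - PB k y - 1) * BB + BB \<le> real (N - PB k x - 1) * BB"
      proof -
        have "real (N - PB k y - 1) + 1 \<le> real (N - PB k x - 1)" using lt Q by linarith
        then have "(real (N - PB k y - 1) + 1) * BB \<le> real (N - PB k x - 1) * BB" using B0 by (rule mult_right_mono)
        then show ?thesis by (simp add: algebra_simps)
      qed
      moreover have "st v \<le> CC v" using CC_facts(3)[OF n2 vle] .
      ultimately show ?thesis using Vx Vy st0 by auto
    qed
  qed
  then show "Vr y \<le> Vr x" using st0 by (auto split: if_splits)
  show "Fn n k r x < Fn n k r y \<Longrightarrow> Vr y + st (gnat k r (blk k (PB k x) x)) \<le> Vr x"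
    using main unfolding v_def by simp
qed

end


lemma rho_bound:
  assumes "2 \<le> n" shows "exp (-2) \<le> (1 - 1 / real n) ^ n"
proof -
  have n0: "0 < real n" using assms by simp
  have h: "- (1 / real n) - 2 * (1 / real n)^2 \<le> ln (1 - 1 / real n)"
    using assms by (intro ln_one_minus_pos_lower_bound) (auto simp: field_simps)
  have "real n * (- (1 / real n) - 2 * (1 / real n)^2) = -1 - 2 / real n"
    using n0 by (simp add: field_simps power2_eq_square)
  also have "\<dots> \<ge> -2" using assms by (simp add: field_simps)
  finally have "-2 \<le> real n * ln (1 - 1 / real n)"
    using mult_left_mono[OF h, of "real n"] n0 by linarith
  then have "exp (-2) \<le> exp (real n * ln (1 - 1 / real n))" by simp
  also have "\<dots> = exp (ln (1 - 1 / real n)) ^ n" by (rule exp_of_nat_mult)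
  also have "\<dots> = (1 - 1 / real n) ^ n" using assms by (subst exp_ln) (auto simp: field_simps)
  finally show ?thesis .
qed

context setting
begin

lemma set_pmf_step:
  assumes "length x = n"
  shows "set_pmf (ea_step F n (replicate n True) x) \<subseteq> {y. length y = n}"
  using assms set_pmf_mutate[of "1 / real n" x] unfolding ea_step_def by auto

lemma drift_ennreal:
  assumes n2: "2 \<le> n" and x: "length x = n" and xo: "x \<noteq> replicate n True"
  shows "1 + (\<integral>\<^sup>+y. ennreal (Vr y) \<partial>ea_step (lo_fork n k r) n (replicate n True) x) \<le> ennreal (Vr x)"
proof -
  let ?F = "lo_fork n k r"
  let ?p = "1 / real n"
  have P: "PB k x < N" using PB_le[OF x] PB_N_iff[OF x] xo by fastforce
  define v where "v = gnat k r (blk k (PB k x) x)"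
  obtain ys where ys: "length ys = n" "Fn n k r x < Fn n k r ys"
    "hdist x ys = (if v = k + 1 then 2 * r else if v = k then r else 1)"
    using target[OF x P] unfolding v_def by blast
  define h where "h = hdist x ys"
  have sth: "st v = real n ^ h / rho" unfolding st_def h_def ys(3) by simp
  have rp: "0 < rho" by (rule rho_pos[OF n2])
  have p01: "0 \<le> ?p" "?p \<le> 1" using n2 by auto
  have hn: "h \<le> n" unfolding h_def using hdist_le[of x ys] x by simp
  have pm: "pmf (mutate ?p x) ys = ?p ^ h * (1 - ?p) ^ (n - h)"
    unfolding pmf_mutate[OF p01] h_def using mf_hdist[of x ys ?p] x ys(1) by simp
  have "(1 - ?p) ^ n \<le> (1 - ?p) ^ (n - h)"
    using n2 by (intro power_decreasing) auto
  then have "?p ^ h * rho \<le> pmf (mutate ?p x) ys"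
    unfolding pm rho_def by (intro mult_left_mono) auto
  then have "real n ^ h / rho * (?p ^ h * rho) \<le> st v * pmf (mutate ?p x) ys"
    unfolding sth using rp by (intro mult_left_mono) auto
  moreover have "real n ^ h / rho * (?p ^ h * rho) = 1"
    using rp n2 by (simp add: power_one_over field_simps)
  ultimately have one: "1 \<le> st v * pmf (mutate ?p x) ys" by simp
  have st0: "0 \<le> st v" unfolding st_def using rp by simp
  define acc where "acc y = (if ?F x \<le> ?F y then y else x)" for y
  have K: "ea_step ?F n (replicate n True) x = bind_pmf (mutate ?p x) (\<lambda>y. return_pmf (acc y))"
    unfolding ea_step_def acc_def using xo by simp
  have pw: "ennreal (st v) * indicator {ys} y + ennreal (Vr (acc y)) \<le> ennreal (Vr x)"
    if y: "y \<in> set_pmf (mutate ?p x)" for y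
  proof -
    have ly: "length y = n" using y set_pmf_mutate[of ?p x] x by auto
    have accF: "?F x \<le> ?F y \<longleftrightarrow> Fn n k r x \<le> Fn n k r y"
      using lo_fork_Fn[OF x] lo_fork_Fn[OF ly] by simp
    show ?thesis
    proof (cases "y = ys")
      case True
      then have "acc y = ys" unfolding acc_def using accF ys(2) by simp
      moreover have "Vr ys + st v \<le> Vr x"
        using Vr_drift(2)[OF n2 x ys(1) P] ys(2) unfolding v_def by simp
      ultimately show ?thesis using True st0 Vr_bounds(1)[OF n2 ys(1)]
        by (simp add: ennreal_plus[symmetric] add.commute del: ennreal_plus)
    next
      case False
      have "Vr (acc y) \<le> Vr x"
      proof (cases "Fn n k r x \<le> Fn n k r y")
        case True
        then show ?thesis unfolding acc_def using accF Vr_drift(1)[OF n2 x ly P True] by simp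
      next
        case False then show ?thesis unfolding acc_def using accF by simp
      qed
      then show ?thesis using False by (simp add: ennreal_leI)
    qed
  qed
  have "1 + (\<integral>\<^sup>+y. ennreal (Vr y) \<partial>ea_step ?F n (replicate n True) x)
      = 1 + (\<integral>\<^sup>+y. ennreal (Vr (acc y)) \<partial>mutate ?p x)"
    unfolding K by simp
  also have "\<dots> \<le> ennreal (st v) * emeasure (mutate ?p x) {ys} + (\<integral>\<^sup>+y. ennreal (Vr (acc y)) \<partial>mutate ?p x)"
  proof (rule add_right_mono)
    have "ennreal (st v) * emeasure (mutate ?p x) {ys} = ennreal (st v * pmf (mutate ?p x) ys)"
      using st0 by (simp add: emeasure_pmf_single ennreal_mult)
    then show "1 \<le> ennreal (st v) * emeasure (mutate ?p x) {ys}"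
      using one by (simp add: ennreal_leI[OF one, simplified])
  qed
  also have "\<dots> = (\<integral>\<^sup>+y. ennreal (st v) * indicator {ys} y + ennreal (Vr (acc y)) \<partial>mutate ?p x)"
    by (simp add: nn_integral_add nn_integral_cmult_indicator)
  also have "\<dots> \<le> (\<integral>\<^sup>+y. ennreal (Vr x) \<partial>mutate ?p x)"
    by (rule nn_integral_mono_AE) (auto intro!: AE_pmfI pw)
  also have "\<dots> = ennreal (Vr x)" by (simp add: measure_pmf.emeasure_space_1)
  finally show ?thesis .
qed

end


lemma ea_expected_time_itK:
  "ea_expected_time F n opt = (\<Sum>t. emeasure (itK (ea_step F n opt) t (pmf_of_set {x. length x = n})) {x. x \<noteq> opt})"
  unfolding ea_expected_time_def ea_state_def itK_def measure_pmf.emeasure_eq_measure ..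

lemma fin_lists: "finite {x :: bool list. length x = n}" "{x :: bool list. length x = n} \<noteq> {}"
  by (rule finite_list_length) (auto intro: exI[of _ "replicate n True"])

context setting
begin

lemma NBB_bound:
  assumes n2: "2 \<le> n"
  shows "real N * BB \<le> 3 * exp 2 * real n ^ (2 * r + 1) / real k"
proof -
  have rp: "0 < rho" by (rule rho_pos[OF n2])
  have rb: "exp (-2) \<le> rho" unfolding rho_def by (rule rho_bound[OF n2])
  have kn: "k \<le> n" using kdvd n2 by (simp add: dvd_imp_le)
  have n1: "1 \<le> real n" using n2 by simp
  have "real k * real n \<le> real n * real n" using kn by (simp add: mult_right_mono)
  also have "\<dots> = real n ^ 2" by (simp add: power2_eq_square)
  also have "\<dots> \<le> real n ^ (2 * r)" using n1 r1 by (intro power_increasing) auto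
  finally have a: "real k * real n \<le> real n ^ (2 * r)" .
  have b: "real n ^ r \<le> real n ^ (2 * r)" using n1 by (intro power_increasing) auto
  have "BB = (real k * real n + real n ^ r + real n ^ (2 * r)) / rho"
    unfolding BB_def by (simp add: add_divide_distrib)
  also have "\<dots> \<le> (3 * real n ^ (2 * r)) / rho"
    using a b rp by (intro divide_right_mono) auto
  also have "\<dots> \<le> 3 * real n ^ (2 * r) * exp 2"
  proof -
    have "1 \<le> exp 2 * rho" using mult_left_mono[OF rb, of "exp 2"] by (simp add: exp_minus)
    then have "3 * real n ^ (2 * r) * 1 \<le> 3 * real n ^ (2 * r) * (exp 2 * rho)"
      by (intro mult_left_mono) auto
    then show ?thesis using rp by (simp add: field_simps)
  qed
  finally have B: "BB \<le> 3 * real n ^ (2 * r) * exp 2" .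
  have RN: "real N = real n / real k" using kdvd by (simp add: real_of_nat_div)
  have "real N * BB \<le> real N * (3 * real n ^ (2 * r) * exp 2)"
    using B by (intro mult_left_mono) auto
  also have "\<dots> = 3 * exp 2 * real n ^ (2 * r + 1) / real k"
    unfolding RN by (simp add: field_simps)
  finally show ?thesis .
qed

lemma upper:
  assumes n2: "2 \<le> n"
  shows "ea_expected_time (lo_fork n k r) n (replicate n True) \<le> ennreal (3 * exp 2 * real n ^ (2 * r + 1) / real k)"
proof -
  let ?K = "ea_step (lo_fork n k r) n (replicate n True)"
  let ?\<Omega> = "{x :: bool list. length x = n}"
  let ?\<mu> = "pmf_of_set ?\<Omega>"
  have "ea_expected_time (lo_fork n k r) n (replicate n True) = (\<Sum>t. emeasure (itK ?K t ?\<mu>) {x. x \<noteq> replicate n True})"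
    by (rule ea_expected_time_itK)
  also have "\<dots> \<le> (\<integral>\<^sup>+x. ennreal (Vr x) \<partial>?\<mu>)"
  proof (rule ub_abstract[where \<Omega> = ?\<Omega>])
    show "\<And>x. x \<in> ?\<Omega> \<Longrightarrow> set_pmf (?K x) \<subseteq> ?\<Omega>" using set_pmf_step by auto
    show "set_pmf ?\<mu> \<subseteq> ?\<Omega>" using fin_lists by simp
    show "?K (replicate n True) = return_pmf (replicate n True)" unfolding ea_step_def by simp
    show "\<And>x. x \<in> ?\<Omega> \<Longrightarrow> x \<noteq> replicate n True \<Longrightarrow> 1 + (\<integral>\<^sup>+y. ennreal (Vr y) \<partial>?K x) \<le> ennreal (Vr x)"
      using drift_ennreal[OF n2] by auto
  qed
  also have "\<dots> \<le> (\<integral>\<^sup>+x. ennreal (real N * BB) \<partial>?\<mu>)"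
    by (rule nn_integral_mono_AE, rule AE_pmfI) (use fin_lists Vr_bounds(2)[OF n2] in \<open>auto intro: ennreal_leI\<close>)
  also have "\<dots> = ennreal (real N * BB)" by (simp add: measure_pmf.emeasure_space_1)
  also have "\<dots> \<le> ennreal (3 * exp 2 * real n ^ (2 * r + 1) / real k)"
    by (rule ennreal_leI[OF NBB_bound[OF n2]])
  finally show ?thesis .
qed

end


lemma mf_tau:
  assumes "length a = k" "length b = k" "2 * r \<le> k"
  shows "mf p (tau k r a) (tau k r b) = mf p a b"
proof -
  obtain a1 a2 a3 where a: "a = a1 @ a2 @ a3" "length a1 = r" "length a2 = k - 2 * r" "length a3 = r"
    using split3[OF assms(1,3)] by blast
  obtain b1 b2 b3 where b: "b = b1 @ b2 @ b3" "length b1 = r" "length b2 = k - 2 * r" "length b3 = r"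
    using split3[OF assms(2,3)] by blast
  show ?thesis unfolding a(1) b(1) using a(2-4) b(2-4) assms(3)
    by (simp add: tau_split mf_append mf_Not)
qed

lemma blk_take: "(P + 1) * k \<le> b \<Longrightarrow> blk k P (take b y) = blk k P y"
  unfolding blk_def by (simp add: drop_take min_def algebra_simps)

locale blockm = setting +
  fixes m :: nat
  assumes mN: "m < N"
begin

abbreviation "sg \<equiv> sig k r m"
definition Dm :: "bool list set" where
  "Dm = {x. length x = n \<and> PB k x = m \<and> blk k m x = TRAP k r}"
definition Sm :: "bool list set" where
  "Sm = {x. length x = n \<and> m * k \<le> lo x \<and> (blk k m x = replicate k True \<or> blk k m x = TRAP k r)}"

lemma mb: "m * k + k \<le> n" using blk_bound[OF mN] by (simp add: algebra_simps)

lemma TRAP_ne: "TRAP k r \<noteq> replicate k True"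
proof
  assume h: "TRAP k r = replicate k True"
  have "TRAP k r ! 0 = False" using r1 by (simp add: TRAP_def nth_append)
  moreover have "replicate k True ! 0 = True" using kpos by simp
  ultimately show False using h by simp
qed

lemma gnat_TRAP: "gnat k r (TRAP k r) = k + 1"
  using TRAP_ne by (simp add: gnat_def)

lemma sg_facts:
  assumes x: "length x = n"
  shows "length (sg x) = n" "take (m * k) (sg x) = take (m * k) x" "blk k m (sg x) = tau k r (blk k m x)"
    "sg (sg x) = x"
proof -
  have lb: "length (blk k m x) = k" by (rule blk_len[OF x mN])
  have lt: "length (tau k r (blk k m x)) = k" by (rule length_tau[OF lb kr])
  show l: "length (sg x) = n" unfolding sig_def using x mb lt by simp
  show t: "take (m * k) (sg x) = take (m * k) x" unfolding sig_def using x mb by simp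
  show b: "blk k m (sg x) = tau k r (blk k m x)" using x mb lt unfolding sig_def blk_def by simp
  have d: "drop (m * k + k) (sg x) = drop (m * k + k) x" unfolding sig_def using x mb lt by simp
  show "sg (sg x) = x"
    unfolding sig_def[of k r m "sg x"] t b d tau_tau[OF lb kr]
    unfolding blk_def using decomp[of "m * k" x] x mb by (simp add: mult.commute)
qed

lemma mf_sg:
  assumes x: "length x = n" and y: "length y = n"
  shows "mf p (sg x) (sg y) = mf p x y"
proof -
  have dx: "x = take (m * k) x @ blk k m x @ drop (m * k + k) x"
    unfolding blk_def using decomp[of "m * k" x] x mb by (simp add: mult.commute)
  have dy: "y = take (m * k) y @ blk k m y @ drop (m * k + k) y"
    unfolding blk_def using decomp[of "m * k" y] y mb by (simp add: mult.commute)
  have lb: "length (blk k m x) = k" "length (blk k m y) = k" using blk_len[OF _ mN] x y by auto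
  have "mf p x y = mf p (take (m * k) x) (take (m * k) y) * (mf p (blk k m x) (blk k m y) *
      mf p (drop (m * k + k) x) (drop (m * k + k) y))"
    by (subst dx, subst dy) (simp add: mf_append lb x y mb)
  moreover have "mf p (sg x) (sg y) = mf p (take (m * k) x) (take (m * k) y) * (mf p (tau k r (blk k m x)) (tau k r (blk k m y)) *
      mf p (drop (m * k + k) x) (drop (m * k + k) y))"
    unfolding sig_def using lb x y mb length_tau[OF _ kr] by (simp add: mf_append)
  ultimately show ?thesis using mf_tau[OF lb kr] by simp
qed

lemma mutate_sg:
  assumes x: "length x = n" and p: "0 \<le> p" "p \<le> 1"
  shows "mutate p (sg x) = map_pmf sg (mutate p x)"
proof (rule pmf_eqI)
  fix w
  let ?M = "mutate p x"
  have supp: "y \<in> set_pmf ?M \<Longrightarrow> length y = n" for y using set_pmf_mutate[of p x] x by auto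
  have "pmf (map_pmf sg ?M) w = measure ?M (sg -` {w})" by (rule pmf_map)
  also have "\<dots> = measure ?M (sg -` {w} \<inter> set_pmf ?M)" by (rule measure_Int_set_pmf[symmetric])
  finally have e: "pmf (map_pmf sg ?M) w = measure ?M (sg -` {w} \<inter> set_pmf ?M)" .
  show "pmf (mutate p (sg x)) w = pmf (map_pmf sg ?M) w"
  proof (cases "length w = n")
    case True
    have "sg -` {w} \<inter> set_pmf ?M = {sg w} \<inter> set_pmf ?M"
    proof (intro set_eqI iffI)
      fix y assume "y \<in> sg -` {w} \<inter> set_pmf ?M"
      then have "sg y = w" "y \<in> set_pmf ?M" by auto
      then have "y = sg w" using sg_facts(4)[OF supp[of y]] by metis
      then show "y \<in> {sg w} \<inter> set_pmf ?M" using \<open>y \<in> set_pmf ?M\<close> by simp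
    next
      fix y assume "y \<in> {sg w} \<inter> set_pmf ?M"
      then show "y \<in> sg -` {w} \<inter> set_pmf ?M" using sg_facts(4)[OF True] by auto
    qed
    then have "pmf (map_pmf sg ?M) w = pmf ?M (sg w)"
      using e by (simp add: measure_Int_set_pmf measure_pmf_single)
    also have "\<dots> = mf p x (sg w)" by (rule pmf_mutate[OF p])
    also have "\<dots> = mf p (sg x) (sg (sg w))" using mf_sg[OF x sg_facts(1)[OF True]] by simp
    also have "\<dots> = pmf (mutate p (sg x)) w" using sg_facts(4)[OF True] pmf_mutate[OF p] by simp
    finally show ?thesis by simp
  next
    case False
    have "sg -` {w} \<inter> set_pmf ?M = {}"
    proof (rule ccontr)
      assume "sg -` {w} \<inter> set_pmf ?M \<noteq> {}"
      then obtain y where "y \<in> set_pmf ?M" "sg y = w" by auto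
      then show False using sg_facts(1)[OF supp[of y]] False by simp
    qed
    then have "pmf (map_pmf sg ?M) w = 0" using e by simp
    moreover have "pmf (mutate p (sg x)) w = 0"
      using pmf_mutate[OF p] mf_len sg_facts(1)[OF x] False by metis
    ultimately show ?thesis by simp
  qed
qed

end


context blockm
begin

lemma n_pos: "0 < n" using mb kpos by simp

lemma tau_ONES_iff: "length z = k \<Longrightarrow> tau k r z = replicate k True \<longleftrightarrow> z = TRAP k r"
  using tau_tau[of z k r] tau_ONES[OF kr] tau_TRAP[OF kr] kr by metis

lemma tau_TRAP_iff: "length z = k \<Longrightarrow> tau k r z = TRAP k r \<longleftrightarrow> z = replicate k True"
  using tau_tau[of z k r] tau_ONES[OF kr] tau_TRAP[OF kr] kr by metis

lemma lo_sg_ge: "length x = n \<Longrightarrow> m * k \<le> lo (sg x) \<longleftrightarrow> m * k \<le> lo x"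
  using lo_take_ge[OF sg_facts(2)[symmetric]] sg_facts(1) mb by simp

lemma mb': "(m + 1) * k \<le> n" using mb by (simp add: algebra_simps)

lemma Dm_iff: "length x = n \<Longrightarrow> x \<in> Dm \<longleftrightarrow> m * k \<le> lo x \<and> blk k m x = TRAP k r"
proof
  assume "x \<in> Dm" then show "m * k \<le> lo x \<and> blk k m x = TRAP k r"
    unfolding Dm_def using PB_ge[of x] by auto
next
  assume x: "length x = n" and h: "m * k \<le> lo x \<and> blk k m x = TRAP k r"
  then have "\<not> (m + 1) * k \<le> lo x" using blk_ones_iff[of m k x] mb' TRAP_ne by auto
  then have "PB k x = m" using PB_eq h by simp
  then show "x \<in> Dm" unfolding Dm_def using x h by simp
qed

lemma Dm_sub: "Dm \<subseteq> Sm"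
  unfolding Sm_def using Dm_iff unfolding Dm_def by blast

lemma opt_Sm: "replicate n True \<in> Sm"
proof -
  have lo: "lo (replicate n True) = n" unfolding lo_def by simp
  have "blk k m (replicate n True) = replicate k True" by (rule blk_ones) (use mb in \<open>simp add: lo\<close>)
  then show ?thesis unfolding Sm_def using lo mb by simp
qed

lemma Sm_sg: "length x = n \<Longrightarrow> sg x \<in> Sm \<longleftrightarrow> x \<in> Sm"
  unfolding Sm_def using lo_sg_ge sg_facts tau_ONES_iff tau_TRAP_iff blk_len[OF _ mN] by auto

lemma SmD_sg: "length x = n \<Longrightarrow> sg x \<in> Sm - Dm \<longleftrightarrow> x \<in> Dm"
proof -
  assume x: "length x = n"
  have lb: "length (blk k m x) = k" using blk_len[OF x mN] .
  have "sg x \<in> Sm - Dm \<longleftrightarrow> m * k \<le> lo (sg x) \<and> blk k m (sg x) = replicate k True"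
    unfolding Sm_def using Dm_iff[OF sg_facts(1)[OF x]] TRAP_ne sg_facts(1)[OF x] by auto
  also have "\<dots> \<longleftrightarrow> m * k \<le> lo x \<and> blk k m x = TRAP k r"
    using lo_sg_ge[OF x] sg_facts(3)[OF x] tau_ONES_iff[OF lb] by simp
  also have "\<dots> \<longleftrightarrow> x \<in> Dm" using Dm_iff[OF x] by simp
  finally show ?thesis .
qed

lemma Fn_Sm:
  assumes x: "length x = n" and S: "x \<in> Sm"
  shows "m * (k + 2) + k + 1 \<le> Fn n k r x"
proof (cases "blk k m x = replicate k True")
  case True
  then have "(m + 1) * k \<le> lo x" using blk_ones_iff[of m k x] mb' S x unfolding Sm_def by auto
  then have "m < PB k x" by (rule PB_gt)
  then have "(m + 1) * (k + 2) \<le> PB k x * (k + 2)" by (intro mult_le_mono1) simp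
  then show ?thesis using Fn_lower[of x] by simp
next
  case False
  then have T: "blk k m x = TRAP k r" "m * k \<le> lo x" using S unfolding Sm_def by auto
  then have "x \<in> Dm" using Dm_iff x by simp
  then have "PB k x = m" unfolding Dm_def by simp
  then show ?thesis unfolding Fn_def using T mN gnat_TRAP by simp
qed

lemma Fn_notSm:
  assumes x: "length x = n" and S: "x \<notin> Sm"
  shows "Fn n k r x \<le> m * (k + 2) + k"
proof (cases "m * k \<le> lo x")
  case False
  then have "PB k x * k < m * k" using PB_ge[of x] by linarith
  then have Pm: "PB k x < m" using mult_less_cancel2 by blast
  then have "PB k x < N" using mN by simp
  then have "Fn n k r x \<le> PB k x * (k + 2) + (k + 1)" by (rule Fn_upper[OF x])
  also have "\<dots> < (PB k x + 1) * (k + 2)" by simp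
  also have "\<dots> \<le> m * (k + 2)" using Pm by (intro mult_le_mono1) simp
  finally show ?thesis by simp
next
  case True
  then have ne: "blk k m x \<noteq> replicate k True" "blk k m x \<noteq> TRAP k r" using S x unfolding Sm_def by auto
  then have "\<not> (m + 1) * k \<le> lo x" using blk_ones_iff[of m k x] mb' True x by auto
  then have P: "PB k x = m" using PB_eq True by simp
  have lb: "length (blk k m x) = k" using blk_len[OF x mN] .
  have "gnat k r (blk k m x) \<le> k + 1" using gnat_le[OF lb ne(1)] .
  moreover have "gnat k r (blk k m x) \<noteq> k + 1" using gnat_k1[OF lb ne(1)] ne(2) by auto
  ultimately show ?thesis unfolding Fn_def using P mN by simp
qed

lemma Fn_sg:
  assumes x: "length x = n" and S: "x \<notin> Sm"
  shows "Fn n k r (sg x) = Fn n k r x"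
proof (cases "m * k \<le> lo x")
  case False
  then have lt: "lo x < m * k" by simp
  have lo: "lo (sg x) = lo x"
    by (rule lo_take_eq[OF sg_facts(2)[OF x, symmetric] lt]) (use x mb sg_facts(1)[OF x] in auto)
  then have PB: "PB k (sg x) = PB k x" unfolding PB_def by simp
  have "PB k x * k < m * k" using PB_ge[of x] lt by linarith
  then have Pm: "PB k x < m" using mult_less_cancel2 by blast
  then have "(PB k x + 1) * k \<le> m * k" by (intro mult_le_mono1) simp
  then have "blk k (PB k x) (take (m * k) (sg x)) = blk k (PB k x) (sg x)"
    "blk k (PB k x) (take (m * k) x) = blk k (PB k x) x" using blk_take by auto
  then have "blk k (PB k x) (sg x) = blk k (PB k x) x" using sg_facts(2)[OF x] by simp
  then show ?thesis unfolding Fn_def PB by simp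
next
  case True
  have lb: "length (blk k m x) = k" using blk_len[OF x mN] .
  have ne: "blk k m x \<noteq> replicate k True" "blk k m x \<noteq> TRAP k r" using S x True unfolding Sm_def by auto
  then have "\<not> (m + 1) * k \<le> lo x" using blk_ones_iff[of m k x] mb' True x by auto
  then have P: "PB k x = m" using PB_eq True by simp
  have ne': "blk k m (sg x) \<noteq> replicate k True" "blk k m (sg x) \<noteq> TRAP k r"
    using gnat_tau(2,3)[OF lb kr ne] sg_facts(3)[OF x] by auto
  have T': "m * k \<le> lo (sg x)" using lo_sg_ge[OF x] True by simp
  then have "\<not> (m + 1) * k \<le> lo (sg x)" using blk_ones_iff[of m k "sg x"] mb' ne' sg_facts(1)[OF x] by auto
  then have P': "PB k (sg x) = m" using PB_eq T' by simp
  show ?thesis unfolding Fn_def P P' sg_facts(3)[OF x] gnat_tau(1)[OF lb kr ne] ..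
qed

definition KS :: "bool list \<Rightarrow> bool list pmf" where
  "KS x = (if x \<in> Sm then return_pmf x else ea_step (lo_fork n k r) n (replicate n True) x)"

lemma KS_sg:
  assumes x: "length x = n"
  shows "KS (sg x) = map_pmf sg (KS x)"
proof (cases "x \<in> Sm")
  case True
  then show ?thesis unfolding KS_def using Sm_sg[OF x] by simp
next
  case False
  let ?F = "lo_fork n k r"
  let ?p = "1 / real n"
  have p: "0 \<le> ?p" "?p \<le> 1" using n_pos by auto
  have nS: "sg x \<notin> Sm" using Sm_sg[OF x] False by simp
  have xo: "x \<noteq> replicate n True" "sg x \<noteq> replicate n True" using False nS opt_Sm by auto
  have eq: "(?F (sg x) \<le> ?F (sg y)) = (?F x \<le> ?F y)" if y: "y \<in> set_pmf (mutate ?p x)" for y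
  proof -
    have ly: "length y = n" using y set_pmf_mutate[of ?p x] x by auto
    have F1: "?F (sg x) = real (Fn n k r x)" using lo_fork_Fn[OF sg_facts(1)[OF x]] Fn_sg[OF x False] by simp
    have F2: "?F x = real (Fn n k r x)" using lo_fork_Fn[OF x] .
    show ?thesis
    proof (cases "y \<in> Sm")
      case True
      then have "sg y \<in> Sm" using Sm_sg[OF ly] by simp
      then have "m * (k + 2) + k + 1 \<le> Fn n k r (sg y)" "m * (k + 2) + k + 1 \<le> Fn n k r y"
        using Fn_Sm[OF sg_facts(1)[OF ly]] Fn_Sm[OF ly True] by auto
      moreover have "Fn n k r x \<le> m * (k + 2) + k" using Fn_notSm[OF x False] .
      ultimately show ?thesis unfolding F1 F2 lo_fork_Fn[OF ly] lo_fork_Fn[OF sg_facts(1)[OF ly]] by simp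
    next
      case False
      then show ?thesis unfolding F1 F2 lo_fork_Fn[OF ly] lo_fork_Fn[OF sg_facts(1)[OF ly]]
        using Fn_sg[OF ly False] by simp
    qed
  qed
  have "KS (sg x) = bind_pmf (mutate ?p (sg x)) (\<lambda>y. return_pmf (if ?F (sg x) \<le> ?F y then y else sg x))"
    unfolding KS_def ea_step_def using nS xo by simp
  also have "\<dots> = bind_pmf (mutate ?p x) (\<lambda>y. return_pmf (if ?F (sg x) \<le> ?F (sg y) then sg y else sg x))"
    unfolding mutate_sg[OF x p] by (simp add: bind_map_pmf)
  also have "\<dots> = bind_pmf (mutate ?p x) (\<lambda>y. return_pmf (sg (if ?F x \<le> ?F y then y else x)))"
    by (rule bind_pmf_cong[OF refl]) (simp add: eq)
  also have "\<dots> = map_pmf sg (KS x)"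
    unfolding KS_def ea_step_def using False xo by (simp add: map_bind_pmf)
  finally show ?thesis .
qed

end


context blockm
begin

abbreviation "\<Omega>n \<equiv> {x :: bool list. length x = n}"

lemma KS_closed: "length x = n \<Longrightarrow> set_pmf (KS x) \<subseteq> \<Omega>n"
  unfolding KS_def using set_pmf_step by auto

lemma sg_image: "sg ` \<Omega>n = \<Omega>n"
proof (intro set_eqI iffI)
  fix y assume "y \<in> sg ` \<Omega>n" then show "y \<in> \<Omega>n" using sg_facts(1) by auto
next
  fix y assume "y \<in> \<Omega>n"
  then have "y = sg (sg y)" "sg y \<in> \<Omega>n" using sg_facts by auto
  then show "y \<in> sg ` \<Omega>n" by blast
qed

lemma sg_inj: "inj_on sg \<Omega>n"
  by (rule inj_on_inverseI[where g = sg]) (use sg_facts(4) in auto)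

lemma itKS_sym:
  "map_pmf sg (itK KS s (pmf_of_set \<Omega>n)) = itK KS s (pmf_of_set \<Omega>n) \<and> set_pmf (itK KS s (pmf_of_set \<Omega>n)) \<subseteq> \<Omega>n"
proof (induction s)
  case 0
  have "map_pmf sg (pmf_of_set \<Omega>n) = pmf_of_set (sg ` \<Omega>n)"
    by (rule map_pmf_of_set_inj[OF sg_inj fin_lists(2) fin_lists(1)])
  then show ?case using sg_image fin_lists by simp
next
  case (Suc s)
  let ?M = "itK KS s (pmf_of_set \<Omega>n)"
  have "map_pmf sg (bind_pmf ?M KS) = bind_pmf ?M (\<lambda>x. map_pmf sg (KS x))" by (rule map_bind_pmf)
  also have "\<dots> = bind_pmf ?M (\<lambda>x. KS (sg x))"
    by (rule bind_pmf_cong[OF refl]) (use Suc KS_sg in auto)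
  also have "\<dots> = bind_pmf (map_pmf sg ?M) KS" by (simp add: bind_map_pmf)
  also have "\<dots> = bind_pmf ?M KS" using Suc by simp
  finally have "map_pmf sg (bind_pmf ?M KS) = bind_pmf ?M KS" .
  moreover have "set_pmf (bind_pmf ?M KS) \<subseteq> \<Omega>n" using Suc KS_closed by auto
  ultimately show ?case by (simp add: itK_Suc)
qed

lemma Sm_Dm_twice:
  "emeasure (itK KS s (pmf_of_set \<Omega>n)) Sm = 2 * emeasure (itK KS s (pmf_of_set \<Omega>n)) Dm"
proof -
  let ?M = "itK KS s (pmf_of_set \<Omega>n)"
  have symM: "map_pmf sg ?M = ?M" and supp: "set_pmf ?M \<subseteq> \<Omega>n" using itKS_sym by auto
  have "emeasure ?M (Sm - Dm) = emeasure (map_pmf sg ?M) (Sm - Dm)" using symM by simp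
  also have "\<dots> = emeasure ?M (sg -` (Sm - Dm))" by simp
  also have "\<dots> = emeasure ?M Dm"
  proof -
    have "AE y in ?M. y \<in> sg -` (Sm - Dm) \<longleftrightarrow> y \<in> Dm"
    proof (rule AE_pmfI)
      fix y assume "y \<in> set_pmf ?M"
      then have "length y = n" using supp by auto
      then show "y \<in> sg -` (Sm - Dm) \<longleftrightarrow> y \<in> Dm" using SmD_sg[of y] by simp
    qed
    then show ?thesis by (rule emeasure_eq_AE) auto
  qed
  finally have e: "emeasure ?M (Sm - Dm) = emeasure ?M Dm" .
  have "emeasure ?M Sm = emeasure ?M (Dm \<union> (Sm - Dm))" using Dm_sub by (simp add: Un_absorb1)
  also have "\<dots> = emeasure ?M Dm + emeasure ?M (Sm - Dm)" by (subst plus_emeasure) auto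
  finally show ?thesis using e by (simp add: mult_2)
qed

lemma map_blk_mutate: "map_pmf (blk k m) (mutate p x) = mutate p (blk k m x)"
proof -
  have "map_pmf (blk k m) (mutate p x) = map_pmf (take k) (map_pmf (drop (m * k)) (mutate p x))"
    unfolding blk_def by (simp add: pmf.map_comp o_def)
  then show ?thesis by (simp add: map_drop_mutate map_take_mutate blk_def)
qed

lemma stay:
  assumes xD: "x \<in> Dm"
  shows "ennreal (1 - (1 / real n) ^ (2 * r)) \<le> emeasure (ea_step (lo_fork n k r) n (replicate n True) x) Dm"
proof -
  let ?F = "lo_fork n k r"
  let ?p = "1 / real n"
  have p: "0 \<le> ?p" "?p \<le> 1" using n_pos by auto
  have x: "length x = n" and Px: "PB k x = m" and bx: "blk k m x = TRAP k r" using xD unfolding Dm_def by auto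
  have xo: "x \<noteq> replicate n True" using Px PB_N_iff[OF x] mN by auto
  define acc where "acc y = (if ?F x \<le> ?F y then y else x)" for y
  have K: "ea_step ?F n (replicate n True) x = bind_pmf (mutate ?p x) (\<lambda>y. return_pmf (acc y))"
    unfolding ea_step_def acc_def using xo by simp
  let ?B = "{y. blk k m y \<noteq> replicate k True}"
  have Fx: "m * (k + 2) + k + 1 \<le> Fn n k r x" using Fn_Sm[OF x] Dm_sub xD by auto
  have pw: "indicator ?B y \<le> (indicator Dm (acc y) :: ennreal)" if y: "y \<in> set_pmf (mutate ?p x)" for y
  proof (cases "y \<in> ?B")
    case True
    have ly: "length y = n" using y set_pmf_mutate[of ?p x] x by auto
    have "acc y \<in> Dm"
    proof (cases "?F x \<le> ?F y")
      case True
      then have "Fn n k r x \<le> Fn n k r y" using lo_fork_Fn[OF x] lo_fork_Fn[OF ly] by simp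
      then have "y \<in> Sm" using Fn_notSm[OF ly] Fx by fastforce
      then have "y \<in> Dm" using Dm_iff[OF ly] \<open>y \<in> ?B\<close> unfolding Sm_def by auto
      then show ?thesis unfolding acc_def using True by simp
    next
      case False then show ?thesis unfolding acc_def using xD by simp
    qed
    then show ?thesis using True by simp
  qed simp
  have "emeasure (mutate ?p x) ?B = (\<integral>\<^sup>+y. indicator ?B y \<partial>mutate ?p x)"
    by (rule nn_integral_indicator[symmetric]) simp
  also have "\<dots> \<le> (\<integral>\<^sup>+y. indicator Dm (acc y) \<partial>mutate ?p x)"
    by (rule nn_integral_mono_AE, rule AE_pmfI, rule pw)
  finally have "emeasure (mutate ?p x) ?B \<le> (\<integral>\<^sup>+y. indicator Dm (acc y) \<partial>mutate ?p x)" .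
  also have "\<dots> = emeasure (ea_step ?F n (replicate n True) x) Dm"
    unfolding K by simp
  finally have ge: "emeasure (mutate ?p x) ?B \<le> emeasure (ea_step ?F n (replicate n True) x) Dm" .
  have "measure (mutate ?p x) (- ?B) = measure (map_pmf (blk k m) (mutate ?p x)) {replicate k True}"
    by (simp add: vimage_def Compl_eq)
  also have "\<dots> = pmf (mutate ?p (TRAP k r)) (replicate k True)"
    by (simp add: map_blk_mutate bx measure_pmf_single)
  also have "\<dots> = ?p ^ (2 * r) * (1 - ?p) ^ (k - 2 * r)"
    using pmf_mutate[OF p] mf_hdist[of "TRAP k r" "replicate k True" ?p] hdist_TRAP[OF kr] length_TRAP[OF kr]
    by simp
  also have "\<dots> \<le> ?p ^ (2 * r)"
    using p by (intro mult_left_le) (auto intro: power_le_one)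
  finally have "measure (mutate ?p x) (- ?B) \<le> ?p ^ (2 * r)" .
  then have "1 - ?p ^ (2 * r) \<le> measure (mutate ?p x) ?B"
    using measure_pmf.prob_compl[of "- ?B" "mutate ?p x"] by simp
  then have "ennreal (1 - ?p ^ (2 * r)) \<le> emeasure (mutate ?p x) ?B"
    by (simp add: measure_pmf.emeasure_eq_measure ennreal_leI)
  then show ?thesis using ge by (rule order_trans)
qed

end


context blockm
begin

lemma KS_eq: "KS = (\<lambda>x. if x \<in> Sm then return_pmf x else ea_step (lo_fork n k r) n (replicate n True) x)"
  by (rule ext) (simp add: KS_def)

lemma block_lower:
  fixes T s :: nat
  defines "q \<equiv> (1 / real n) ^ (2 * r)"
  assumes n2: "2 \<le> n" and T: "(1 - q) ^ T \<le> 1 / 2"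
    and s: "1 / 2 \<le> measure (itK (ea_step (lo_fork n k r) n (replicate n True)) s (pmf_of_set \<Omega>n)) {replicate n True}"
  shows "real n ^ (2 * r) / 8 \<le> (\<Sum>t<T + s. measure (itK (ea_step (lo_fork n k r) n (replicate n True)) t (pmf_of_set \<Omega>n)) Dm)"
proof -
  let ?K = "ea_step (lo_fork n k r) n (replicate n True)"
  let ?\<mu> = "pmf_of_set \<Omega>n"
  have q0: "0 < q" "q \<le> 1" unfolding q_def using n2 by (auto simp: power_le_one)
  have occ: "emeasure (itK KS s ?\<mu>) Dm * ennreal (\<Sum>t<T. (1 - q) ^ t) \<le> (\<Sum>t<T + s. emeasure (itK ?K t ?\<mu>) Dm)"
    unfolding KS_eq by (rule occ_abstract) (use stay q0 in \<open>auto simp: q_def\<close>)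
  have hit: "emeasure (itK ?K s ?\<mu>) {replicate n True} \<le> emeasure (itK KS s ?\<mu>) Sm"
    unfolding KS_eq by (rule hit_abstract[OF opt_Sm]) (simp add: ea_step_def)
  define a where "a = measure (itK KS s ?\<mu>) Dm"
  define G where "G = (\<Sum>t<T. (1 - q) ^ t)"
  have G0: "0 \<le> G" unfolding G_def using q0 by (auto intro: sum_nonneg)
  have "ennreal (1 / 2) \<le> ennreal (2 * a)"
  proof -
    have "ennreal (1 / 2) \<le> emeasure (itK ?K s ?\<mu>) {replicate n True}"
      unfolding measure_pmf.emeasure_eq_measure by (rule ennreal_leI[OF s])
    also have "\<dots> \<le> 2 * emeasure (itK KS s ?\<mu>) Dm" using hit Sm_Dm_twice by simp
    also have "\<dots> = ennreal (2 * a)" unfolding a_def by (simp add: measure_pmf.emeasure_eq_measure ennreal_mult)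
    finally show ?thesis .
  qed
  moreover have h0: "0 \<le> 2 * a" unfolding a_def by simp
  ultimately have "1 / 2 \<le> 2 * a" using ennreal_le_iff[OF h0, of "1 / 2"] by blast
  then have a4: "1 / 4 \<le> a" by simp
  have "ennreal (a * G) \<le> ennreal (\<Sum>t<T + s. measure (itK ?K t ?\<mu>) Dm)"
  proof -
    have "ennreal (a * G) = emeasure (itK KS s ?\<mu>) Dm * ennreal G"
      unfolding a_def using G0 by (simp add: measure_pmf.emeasure_eq_measure ennreal_mult)
    also have "\<dots> \<le> (\<Sum>t<T + s. emeasure (itK ?K t ?\<mu>) Dm)" using occ unfolding G_def .
    also have "\<dots> = ennreal (\<Sum>t<T + s. measure (itK ?K t ?\<mu>) Dm)"
      by (simp add: measure_pmf.emeasure_eq_measure sum_ennreal)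
    finally show ?thesis .
  qed
  moreover have "0 \<le> (\<Sum>t<T + s. measure (itK ?K t ?\<mu>) Dm)" by (simp add: sum_nonneg)
  ultimately have aG: "a * G \<le> (\<Sum>t<T + s. measure (itK ?K t ?\<mu>) Dm)"
    using ennreal_le_iff by blast
  have "q * G = 1 - (1 - q) ^ T" unfolding G_def using one_diff_power_eq[of "1 - q" T] by simp
  then have qG: "1 / 2 \<le> q * G" using T by simp
  have qn: "q * real n ^ (2 * r) = 1" unfolding q_def using n2 by (simp add: power_one_over)
  have "real n ^ (2 * r) / 8 = (1 / 4) * ((1 / 2) * real n ^ (2 * r))" by simp
  also have "\<dots> \<le> (1 / 4) * ((q * G) * real n ^ (2 * r))"
    using qG by (intro mult_left_mono mult_right_mono) auto
  also have "\<dots> = (1 / 4) * G" using qn by (simp add: algebra_simps)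
  also have "\<dots> \<le> a * G" using a4 G0 by (rule mult_right_mono)
  finally show ?thesis using aG by simp
qed

end


context setting
begin

lemma lower:
  assumes n2: "2 \<le> n"
  shows "ennreal (real n ^ (2 * r + 1) / (8 * real k)) \<le> ea_expected_time (lo_fork n k r) n (replicate n True)"
proof -
  let ?K = "ea_step (lo_fork n k r) n (replicate n True)"
  let ?\<mu> = "pmf_of_set {x :: bool list. length x = n}"
  let ?o = "replicate n True"
  define \<nu> where "\<nu> t = itK ?K t ?\<mu>" for t
  define c where "c = real n ^ (2 * r + 1) / (8 * real k)"
  have E: "ea_expected_time (lo_fork n k r) n ?o = (\<Sum>t. emeasure (\<nu> t) {x. x \<noteq> ?o})"
    unfolding \<nu>_def by (rule ea_expected_time_itK)
  have Epart: "ennreal (\<Sum>t<M. measure (\<nu> t) {x. x \<noteq> ?o}) \<le> ea_expected_time (lo_fork n k r) n ?o" for M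
  proof -
    have "ennreal (\<Sum>t<M. measure (\<nu> t) {x. x \<noteq> ?o}) = (\<Sum>t<M. emeasure (\<nu> t) {x. x \<noteq> ?o})"
      by (simp add: measure_pmf.emeasure_eq_measure sum_ennreal)
    also have "\<dots> \<le> (\<Sum>t. emeasure (\<nu> t) {x. x \<noteq> ?o})" by (rule ennreal_suminf_ge)
    finally show ?thesis using E by simp
  qed
  show ?thesis
  proof (cases "\<exists>s. measure (\<nu> s) {x. x \<noteq> ?o} \<le> 1 / 2")
    case True
    then obtain s where s: "measure (\<nu> s) {x. x \<noteq> ?o} \<le> 1 / 2" by blast
    have "measure (\<nu> s) (UNIV - {?o}) = 1 - measure (\<nu> s) {?o}"
      using measure_pmf.prob_compl[of "{?o}" "\<nu> s"] by simp
    moreover have "UNIV - {?o} = {x. x \<noteq> ?o}" by auto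
    ultimately have s': "1 / 2 \<le> measure (\<nu> s) {?o}" using s by simp
    define q where "q = (1 / real n) ^ (2 * r)"
    have q0: "0 < q" unfolding q_def using n2 by simp
    obtain T where T: "(1 - q) ^ T < 1 / 2" using real_arch_pow_inv[of "1 / 2" "1 - q"] q0 by auto
    define D where "D m = blockm.Dm n k r m" for m
    have bl: "real n ^ (2 * r) / 8 \<le> (\<Sum>t<T + s. measure (\<nu> t) (D m))" if m: "m < N" for m
    proof -
      have bm: "blockm n k r m" by (rule blockm.intro[OF setting_axioms blockm_axioms.intro[OF m]])
      show ?thesis unfolding D_def \<nu>_def
        using blockm.block_lower[OF bm n2, of T s] T s' unfolding q_def \<nu>_def by simp
    qed
    have Dsub: "D m \<subseteq> {x. x \<noteq> ?o}" and DPB: "x \<in> D m \<Longrightarrow> PB k x = m" if m: "m < N" for m x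
    proof -
      have bm: "blockm n k r m" by (rule blockm.intro[OF setting_axioms blockm_axioms.intro[OF m]])
      show "x \<in> D m \<Longrightarrow> PB k x = m" unfolding D_def blockm.Dm_def[OF bm] by simp
      show "D m \<subseteq> {x. x \<noteq> ?o}"
        unfolding D_def blockm.Dm_def[OF bm] using PB_N_iff m by fastforce
    qed
    have "real N * (real n ^ (2 * r) / 8) = (\<Sum>m<N. real n ^ (2 * r) / 8)" by simp
    also have "\<dots> \<le> (\<Sum>m<N. \<Sum>t<T + s. measure (\<nu> t) (D m))" by (rule sum_mono) (use bl in auto)
    also have "\<dots> = (\<Sum>t<T + s. \<Sum>m<N. measure (\<nu> t) (D m))" by (rule sum.swap)
    also have "\<dots> \<le> (\<Sum>t<T + s. measure (\<nu> t) {x. x \<noteq> ?o})"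
    proof (rule sum_mono)
      fix t
      have disj: "disjoint_family_on D {..<N}"
        unfolding disjoint_family_on_def using DPB by auto
      have "(\<Sum>m<N. measure (\<nu> t) (D m)) = measure (\<nu> t) (\<Union>m<N. D m)"
        by (rule measure_pmf.finite_measure_finite_Union[symmetric]) (use disj in auto)
      also have "\<dots> \<le> measure (\<nu> t) {x. x \<noteq> ?o}"
        by (rule measure_pmf.finite_measure_mono) (use Dsub in auto)
      finally show "(\<Sum>m<N. measure (\<nu> t) (D m)) \<le> measure (\<nu> t) {x. x \<noteq> ?o}" .
    qed
    finally have "real N * (real n ^ (2 * r) / 8) \<le> (\<Sum>t<T + s. measure (\<nu> t) {x. x \<noteq> ?o})" .
    moreover have "real N * (real n ^ (2 * r) / 8) = c"
      unfolding c_def using kdvd kpos by (simp add: real_of_nat_div field_simps)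
    ultimately have "ennreal c \<le> ennreal (\<Sum>t<T + s. measure (\<nu> t) {x. x \<noteq> ?o})" by (simp add: ennreal_leI)
    then show ?thesis unfolding c_def using Epart by (rule order_trans)
  next
    case False
    then have hi: "1 / 2 < measure (\<nu> t) {x. x \<noteq> ?o}" for t using not_le by blast
    obtain M :: nat where M: "2 * c < real M" using reals_Archimedean2 by blast
    have "c \<le> real M / 2" using M by simp
    also have "\<dots> = (\<Sum>t<M. 1 / 2)" by simp
    also have "\<dots> \<le> (\<Sum>t<M. measure (\<nu> t) {x. x \<noteq> ?o})" by (rule sum_mono) (use hi in \<open>auto intro: less_imp_le\<close>)
    finally have "ennreal c \<le> ennreal (\<Sum>t<M. measure (\<nu> t) {x. x \<noteq> ?o})" by (rule ennreal_leI)
    then show ?thesis unfolding c_def using Epart by (rule order_trans)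
  qed
qed

end

theorem theorem3:
  fixes r :: nat
  assumes "r \<ge> 2"
  shows "\<exists>c1 c2 :: real. c1 > 0 \<and> c2 > 0 \<and> (\<exists>N. \<forall>n k. n \<ge> N \<longrightarrow> n \<ge> 2 \<longrightarrow> k \<ge> 2 * r \<longrightarrow> k dvd n \<longrightarrow>
     ennreal (c1 * real n ^ (2 * r + 1) / real k)
       \<le> ea_expected_time (lo_fork n k r) n (replicate n True) \<and>
     ea_expected_time (lo_fork n k r) n (replicate n True)
       \<le> ennreal (c2 * real n ^ (2 * r + 1) / real k))"
proof (intro exI conjI allI impI)
  show "(0::real) < 1 / 8" by simp
  show "(0::real) < 3 * exp 2" by simp
  fix n k :: nat
  assume n2: "2 \<le> n" and k: "2 * r \<le> k" and kd: "k dvd n"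
  have st: "setting n k r" by (rule setting.intro) (use assms k kd in auto)
  show "ennreal (1 / 8 * real n ^ (2 * r + 1) / real k) \<le> ea_expected_time (lo_fork n k r) n (replicate n True)"
    using setting.lower[OF st n2] by simp
  show "ea_expected_time (lo_fork n k r) n (replicate n True) \<le> ennreal (3 * exp 2 * real n ^ (2 * r + 1) / real k)"
    using setting.upper[OF st n2] by simp
qed

end
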